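(* Let $W\in\mathcal{P}(\mathcal{Y}|\mathcal{X})$ be a symmetric channel with $R_{\mathrm{cr}}<C(W)$ and let $R_\infty<R<C(W)$. Then: (i) $\mathrm{E}_{\mathrm{SP}}(R)=\mathrm{E}_{\mathrm{SP}}(R,U_{\mathcal{X}})=\tilde{\mathrm{E}}_{\mathrm{SP}}(R,U_{\mathcal{X}})=\tilde{\mathrm{E}}_{\mathrm{SP}}(R)$. (ii) For every $\rho\ge0$ and every $x\in\mathcal{X}$, $$\sum_{y}W(y|x)^{\frac1{1+\rho}}\Big(\sum_zU_{\mathcal{X}}(z)W(y|z)^{\frac1{1+\rho}}\Big)^{\rho}=\sum_y\Big(\sum_zU_{\mathcal{X}}(z)W(y|z)^{\frac1{1+\rho}}\Big)^{1+\rho}.$$ (iii) $\rho_R$ attains the supremum in $\tilde{\mathrm{E}}_{\mathrm{SP}}(R,U_{\mathcal{X}})=\sup_{\rho\ge0}\{\mathrm{E}_{\mathrm{o}}(\rho,U_{\mathcal{X}})-\rho R\}$. (iv) $$\mathrm{E}_{\mathrm{SP}}(R,U_{\mathcal{X}})=\sup_{\rho\ge0}\min_{q\in\mathcal{P}(\mathcal{Y})}\Big\{-\rho R-(1+\rho)\sum_xU_{\mathcal{X}}(x)\ln\sum_yW(y|x)^{\frac1{1+\rho}}q(y)^{\frac{\rho}{1+\rho}}\Big\},$$ and $(\rho_R,q_R)$ is the unique saddle-point of this expression.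
   Context: $\mathcal{X},\mathcal{Y}$ finite; $U_{\mathcal{X}}$ uniform on $\mathcal{X}$. Symmetric (Gallager): outputs can be partitioned into subsets such that within each subset each row of the transition submatrix is a permutation of each other row and each column a permutation of each other column. $\mathrm{E}_{\mathrm{SP}}(R,Q)=\min_{V:I(Q;V)\le R}D(V\|W|Q)$ with $D(V\|W|Q)=\sum_xQ(x)D(V(\cdot|x)\|W(\cdot|x))$; $\mathrm{E}_{\mathrm{SP}}(R)=\max_Q\mathrm{E}_{\mathrm{SP}}(R,Q)$; $\mathrm{E}_{\mathrm{o}}(\rho,Q)=-\ln\sum_y(\sum_xQ(x)W(y|x)^{1/(1+\rho)})^{1+\rho}$; $\tilde{\mathrm{E}}_{\mathrm{SP}}(R,Q)=\sup_{\rho\ge0}\{\mathrm{E}_{\mathrm{o}}(\rho,Q)-\rho R\}$; $\tilde{\mathrm{E}}_{\mathrm{SP}}(R)=\max_Q\tilde{\mathrm{E}}_{\mathrm{SP}}(R,Q)$. $R_\infty$: largest rate below which $\mathrm{E}_{\mathrm{SP}}=\infty$; $R_{\mathrm{cr}}$: critical rate; $C(W)$: capacity. $\rho_R=-\frac{\partial}{\partial r}\mathrm{E}_{\mathrm{SP}}(r,U_{\mathcal{X}})\big|_{r=R}$ (this derivative exists and is positive), and $q_R(y)=\frac{(\sum_xU_{\mathcal{X}}(x)W(y|x)^{1/(1+\rho_R)})^{1+\rho_R}}{\sum_b(\sum_aU_{\mathcal{X}}(a)W(b|a)^{1/(1+\rho_R)})^{1+\rho_R}}$. *)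

theory Defs
  imports "HOL-Analysis.Analysis"
begin

text \<open>Channels W : X -> P(Y) over finite alphabets, written W x y = W(y|x).
  Probability distributions on a finite type are nonnegative functions summing to 1.\<close>

definition pdist :: "('a::finite \<Rightarrow> real) \<Rightarrow> bool" where
  "pdist P \<longleftrightarrow> (\<forall>a. 0 \<le> P a) \<and> (\<Sum>a\<in>UNIV. P a) = 1"

definition channel :: "('x::finite \<Rightarrow> 'y::finite \<Rightarrow> real) \<Rightarrow> bool" where
  "channel W \<longleftrightarrow> (\<forall>x. pdist (W x))"

definition unif :: "'a::finite \<Rightarrow> real" where
  "unif a = 1 / real CARD('a)"

text \<open>Power with the convention t^0 = 1 (also for t = 0); Isabelle's powr has 0 powr 0 = 0.\<close>
definition rpow :: "real \<Rightarrow> real \<Rightarrow> real" where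
  "rpow t a = (if a = 0 then 1 else t powr a)"

definition symmetric_channel :: "('x::finite \<Rightarrow> 'y::finite \<Rightarrow> real) \<Rightarrow> bool" where
  "symmetric_channel W \<longleftrightarrow>
     (\<exists>P. partition_on (UNIV :: 'y set) P \<and>
       (\<forall>B\<in>P.
          (\<forall>x x'. \<exists>\<sigma>. bij_betw \<sigma> B B \<and> (\<forall>y\<in>B. W x' y = W x (\<sigma> y))) \<and>
          (\<forall>y\<in>B. \<forall>y'\<in>B. \<exists>\<pi>::'x \<Rightarrow> 'x. bij \<pi> \<and> (\<forall>x. W x y' = W (\<pi> x) y))))"

definition mutual_info :: "('x::finite \<Rightarrow> real) \<Rightarrow> ('x \<Rightarrow> 'y::finite \<Rightarrow> real) \<Rightarrow> real" where
  "mutual_info Q V = (\<Sum>x\<in>UNIV. \<Sum>y\<in>UNIV.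
      if Q x * V x y = 0 then 0
      else Q x * V x y * ln (V x y / (\<Sum>x'\<in>UNIV. Q x' * V x' y)))"

definition kl_div :: "('y::finite \<Rightarrow> real) \<Rightarrow> ('y \<Rightarrow> real) \<Rightarrow> ereal" where
  "kl_div p q = (\<Sum>y\<in>UNIV.
      if p y = 0 then 0 else if q y = 0 then \<infinity> else ereal (p y * ln (p y / q y)))"

text \<open>Conditional divergence D(V||W|Q) = sum_x Q(x) D(V(.|x)||W(.|x)) (with 0 * \<infinity> = 0).\<close>
definition cond_div ::
  "('x::finite \<Rightarrow> 'y::finite \<Rightarrow> real) \<Rightarrow> ('x \<Rightarrow> 'y \<Rightarrow> real) \<Rightarrow> ('x \<Rightarrow> real) \<Rightarrow> ereal" where
  "cond_div V W Q = (\<Sum>x\<in>UNIV. ereal (Q x) * kl_div (V x) (W x))"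

definition E_SP_Q :: "('x::finite \<Rightarrow> 'y::finite \<Rightarrow> real) \<Rightarrow> real \<Rightarrow> ('x \<Rightarrow> real) \<Rightarrow> ereal" where
  "E_SP_Q W R Q = (INF V \<in> {V. channel V \<and> mutual_info Q V \<le> R}. cond_div V W Q)"

definition E_SP :: "('x::finite \<Rightarrow> 'y::finite \<Rightarrow> real) \<Rightarrow> real \<Rightarrow> ereal" where
  "E_SP W R = (SUP Q \<in> {Q. pdist Q}. E_SP_Q W R Q)"

definition E_o :: "('x::finite \<Rightarrow> 'y::finite \<Rightarrow> real) \<Rightarrow> real \<Rightarrow> ('x \<Rightarrow> real) \<Rightarrow> real" where
  "E_o W \<rho> Q = - ln (\<Sum>y\<in>UNIV. (\<Sum>x\<in>UNIV. Q x * W x y powr (1 / (1 + \<rho>))) powr (1 + \<rho>))"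

definition E_SP_tilde_Q :: "('x::finite \<Rightarrow> 'y::finite \<Rightarrow> real) \<Rightarrow> real \<Rightarrow> ('x \<Rightarrow> real) \<Rightarrow> ereal" where
  "E_SP_tilde_Q W R Q = (SUP \<rho> \<in> {0..}. ereal (E_o W \<rho> Q - \<rho> * R))"

definition E_SP_tilde :: "('x::finite \<Rightarrow> 'y::finite \<Rightarrow> real) \<Rightarrow> real \<Rightarrow> ereal" where
  "E_SP_tilde W R = (SUP Q \<in> {Q. pdist Q}. E_SP_tilde_Q W R Q)"

definition capacity :: "('x::finite \<Rightarrow> 'y::finite \<Rightarrow> real) \<Rightarrow> real" where
  "capacity W = (SUP Q \<in> {Q. pdist Q}. mutual_info Q W)"

definition R_inf :: "('x::finite \<Rightarrow> 'y::finite \<Rightarrow> real) \<Rightarrow> real" where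
  "R_inf W = Sup {R. E_SP W R = \<infinity>}"

text \<open>Critical rate: the largest rate at which E_SP(R) has a supporting line of slope -1,
  i.e. the largest minimiser of E_SP(R) + R.\<close>
definition R_cr :: "('x::finite \<Rightarrow> 'y::finite \<Rightarrow> real) \<Rightarrow> real" where
  "R_cr W = Sup {R. \<forall>R'. E_SP W R + ereal R \<le> E_SP W R' + ereal R'}"

definition rho_R :: "('x::finite \<Rightarrow> 'y::finite \<Rightarrow> real) \<Rightarrow> real \<Rightarrow> real" where
  "rho_R W R = - deriv (\<lambda>r. real_of_ereal (E_SP_Q W r unif)) R"

definition q_R :: "('x::finite \<Rightarrow> 'y::finite \<Rightarrow> real) \<Rightarrow> real \<Rightarrow> 'y \<Rightarrow> real" where
  "q_R W R y =
     (\<Sum>x\<in>UNIV. unif x * W x y powr (1 / (1 + rho_R W R))) powr (1 + rho_R W R) /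
     (\<Sum>b\<in>UNIV. (\<Sum>a\<in>UNIV. unif a * W a b powr (1 / (1 + rho_R W R))) powr (1 + rho_R W R))"

text \<open>The objective in (iv): -rho R - (1+rho) sum_x U(x) ln sum_y W(y|x)^(1/(1+rho)) q(y)^(rho/(1+rho)),
  with ln 0 = -\<infinity> (so the objective is +\<infinity> then).\<close>
definition saddle_obj ::
  "('x::finite \<Rightarrow> 'y::finite \<Rightarrow> real) \<Rightarrow> real \<Rightarrow> real \<Rightarrow> ('y \<Rightarrow> real) \<Rightarrow> ereal" where
  "saddle_obj W R \<rho> q =
     (if \<exists>x. (\<Sum>y\<in>UNIV. W x y powr (1 / (1 + \<rho>)) * rpow (q y) (\<rho> / (1 + \<rho>))) = 0 then \<infinity>
      else ereal (- \<rho> * R - (1 + \<rho>) * (\<Sum>x\<in>UNIV. (unif :: 'x \<Rightarrow> real) x *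
              ln (\<Sum>y\<in>UNIV. W x y powr (1 / (1 + \<rho>)) * rpow (q y) (\<rho> / (1 + \<rho>))))))"

definition is_saddle ::
  "('x::finite \<Rightarrow> 'y::finite \<Rightarrow> real) \<Rightarrow> real \<Rightarrow> real \<Rightarrow> ('y \<Rightarrow> real) \<Rightarrow> bool" where
  "is_saddle W R \<rho>s qs \<longleftrightarrow> 0 \<le> \<rho>s \<and> pdist qs \<and>
     (\<forall>\<rho>\<ge>0. \<forall>q. pdist q \<longrightarrow>
        saddle_obj W R \<rho> qs \<le> saddle_obj W R \<rho>s qs \<and> saddle_obj W R \<rho>s qs \<le> saddle_obj W R \<rho>s q)"

end

theory Submission
  imports Defs
begin


definition blockconst :: "'y set set \<Rightarrow> ('y \<Rightarrow> 'a) \<Rightarrow> bool" where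
  "blockconst P h \<longleftrightarrow> (\<forall>B\<in>P. \<forall>y\<in>B. \<forall>y'\<in>B. h y = h y')"

definition sym_part :: "('x::finite \<Rightarrow> 'y::finite \<Rightarrow> real) \<Rightarrow> 'y set set \<Rightarrow> bool" where
  "sym_part W P \<longleftrightarrow> partition_on (UNIV :: 'y set) P \<and>
       (\<forall>B\<in>P.
          (\<forall>x x'. \<exists>\<sigma>. bij_betw \<sigma> B B \<and> (\<forall>y\<in>B. W x' y = W x (\<sigma> y))) \<and>
          (\<forall>y\<in>B. \<forall>y'\<in>B. \<exists>\<pi>::'x \<Rightarrow> 'x. bij \<pi> \<and> (\<forall>x. W x y' = W (\<pi> x) y)))"

lemma symmetric_channel_part: "symmetric_channel W \<Longrightarrow> \<exists>P. sym_part W P"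
  unfolding symmetric_channel_def sym_part_def by blast

lemma sum_partition:
  fixes f :: "'y::finite \<Rightarrow> 'a::comm_monoid_add"
  assumes "partition_on (UNIV::'y set) P"
  shows "(\<Sum>y\<in>UNIV. f y) = (\<Sum>B\<in>P. \<Sum>y\<in>B. f y)"
proof -
  have U: "UNIV = \<Union>P" using partition_onD1[OF assms] by simp
  have d: "disjoint P" using partition_onD2[OF assms] .
  have "(\<Sum>y\<in>\<Union>P. f y) = (\<Sum>B\<in>P. sum f B)"
    using sum.Union_disjoint[of P f] d by (auto simp: disjoint_def)
  then show ?thesis using U by simp
qed

lemma sym_row:
  assumes "sym_part W P" "blockconst P h"
  shows "(\<Sum>y\<in>UNIV. F (W x y) (h y)) = (\<Sum>y\<in>UNIV. F (W x' y) (h y))"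
proof -
  have pp: "partition_on UNIV P" using assms(1) unfolding sym_part_def by blast
  have "(\<Sum>y\<in>B. F (W x' y) (h y)) = (\<Sum>y\<in>B. F (W x y) (h y))" if B: "B \<in> P" for B
  proof -
    obtain \<sigma> where s: "bij_betw \<sigma> B B" "\<forall>y\<in>B. W x' y = W x (\<sigma> y)"
      using assms(1) B unfolding sym_part_def by blast
    have hc: "\<forall>y\<in>B. h (\<sigma> y) = h y"
      using assms(2) B s(1) unfolding blockconst_def bij_betw_def by blast
    have "(\<Sum>y\<in>B. F (W x' y) (h y)) = (\<Sum>y\<in>B. F (W x (\<sigma> y)) (h (\<sigma> y)))"
      using s(2) hc by (intro sum.cong) auto
    also have "\<dots> = (\<Sum>y\<in>B. F (W x y) (h y))"
      using sum.reindex_bij_betw[OF s(1), of "\<lambda>y. F (W x y) (h y)"] by simp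
    finally show ?thesis .
  qed
  note * = this
  have "(\<Sum>y\<in>UNIV. F (W x y) (h y)) = (\<Sum>B\<in>P. \<Sum>y\<in>B. F (W x y) (h y))"
    by (rule sum_partition[OF pp])
  also have "\<dots> = (\<Sum>B\<in>P. \<Sum>y\<in>B. F (W x' y) (h y))"
  proof (rule sum.cong[OF refl])
    fix B assume B: "B \<in> P"
    show "(\<Sum>y\<in>B. F (W x y) (h y)) = (\<Sum>y\<in>B. F (W x' y) (h y))"
      using *[OF B] by (rule sym)
  qed
  also have "\<dots> = (\<Sum>y\<in>UNIV. F (W x' y) (h y))"
    by (rule sum_partition[OF pp, symmetric])
  finally show ?thesis .
qed

lemma sym_col:
  assumes "sym_part W P"
  shows "blockconst P (\<lambda>y. \<Sum>x\<in>UNIV. G (W x y))"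
  unfolding blockconst_def
proof (intro ballI)
  fix B y y' assume B: "B \<in> P" and y: "y \<in> B" and y': "y' \<in> B"
  obtain \<pi> :: "'a \<Rightarrow> 'a" where p: "bij \<pi>" "\<forall>x. W x y' = W (\<pi> x) y"
    using assms B y y' unfolding sym_part_def by blast
  have "(\<Sum>x\<in>UNIV. G (W x y')) = (\<Sum>x\<in>UNIV. G (W (\<pi> x) y))" using p(2) by simp
  also have "\<dots> = (\<Sum>x\<in>UNIV. G (W x y))"
    using sum.reindex_bij_betw[OF p(1), of "\<lambda>x. G (W x y)"] by simp
  finally show "(\<Sum>x\<in>UNIV. G (W x y)) = (\<Sum>x\<in>UNIV. G (W x y'))" by (rule sym)
qed

lemma blockconst_comp: "blockconst P h \<Longrightarrow> blockconst P (\<lambda>y. f (h y))"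
  unfolding blockconst_def by (metis (no_types, lifting))

lemma blockconst_pair: "blockconst P h \<Longrightarrow> blockconst P g \<Longrightarrow> blockconst P (\<lambda>y. (h y, g y))"
  unfolding blockconst_def by (metis (no_types, lifting))


definition kl :: "('y::finite \<Rightarrow> real) \<Rightarrow> ('y \<Rightarrow> real) \<Rightarrow> real" where
  "kl v u = (\<Sum>y\<in>UNIV. if v y = 0 then 0 else v y * ln (v y / u y))"

definition pout :: "('x::finite \<Rightarrow> real) \<Rightarrow> ('x \<Rightarrow> 'y::finite \<Rightarrow> real) \<Rightarrow> 'y \<Rightarrow> real" where
  "pout Q V y = (\<Sum>x\<in>UNIV. Q x * V x y)"

lemma mi_eq: "mutual_info Q V = (\<Sum>x\<in>UNIV. Q x * kl (V x) (pout Q V))"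
  unfolding mutual_info_def kl_def pout_def
  by (auto simp: sum_distrib_left intro!: sum.cong)

lemma pdist_nonneg: "pdist Q \<Longrightarrow> 0 \<le> Q x" unfolding pdist_def by blast
lemma pdist_sum: "pdist Q \<Longrightarrow> (\<Sum>x\<in>UNIV. Q x) = 1" unfolding pdist_def by blast
lemma channel_nonneg: "channel W \<Longrightarrow> 0 \<le> W x y" unfolding channel_def pdist_def by blast
lemma channel_sum: "channel W \<Longrightarrow> (\<Sum>y\<in>UNIV. W x y) = 1" unfolding channel_def pdist_def by blast

lemma pout_nonneg: "pdist Q \<Longrightarrow> channel V \<Longrightarrow> 0 \<le> pout Q V y"
  unfolding pout_def by (auto intro!: sum_nonneg simp: pdist_nonneg channel_nonneg)

lemma pout_pdist: "pdist Q \<Longrightarrow> channel V \<Longrightarrow> pdist (pout Q V)"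
proof -
  assume Q: "pdist Q" and V: "channel V"
  have "(\<Sum>y\<in>UNIV. pout Q V y) = (\<Sum>x\<in>UNIV. Q x * (\<Sum>y\<in>UNIV. V x y))"
    unfolding pout_def by (subst sum.swap) (simp add: sum_distrib_left)
  also have "\<dots> = 1" using Q V by (simp add: channel_sum pdist_sum)
  finally show ?thesis using pout_nonneg[OF Q V] unfolding pdist_def by blast
qed

lemma pout_pos: "pdist Q \<Longrightarrow> channel V \<Longrightarrow> Q x > 0 \<Longrightarrow> V x y > 0 \<Longrightarrow> pout Q V y > 0"
proof -
  assume Q: "pdist Q" and V: "channel V" and q: "Q x > 0" and v: "V x y > 0"
  have "Q x * V x y \<le> pout Q V y" unfolding pout_def
    by (rule member_le_sum) (auto simp: pdist_nonneg[OF Q] channel_nonneg[OF V])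
  moreover have "Q x * V x y > 0" using q v by simp
  ultimately show ?thesis by linarith
qed

lemma cond_div_fin:
  assumes "\<forall>x y. Q x > 0 \<longrightarrow> V x y \<noteq> 0 \<longrightarrow> W x y \<noteq> 0" "pdist Q"
  shows "cond_div V W Q = ereal (\<Sum>x\<in>UNIV. Q x * kl (V x) (W x))"
proof -
  have "ereal (Q x) * kl_div (V x) (W x) = ereal (Q x * kl (V x) (W x))" for x
  proof (cases "Q x = 0")
    case True then show ?thesis by (simp flip: zero_ereal_def)
  next
    case False
    then have qp: "Q x > 0" using pdist_nonneg[OF assms(2), of x] by simp
    have "kl_div (V x) (W x) = (\<Sum>y\<in>UNIV. ereal (if V x y = 0 then 0 else V x y * ln (V x y / W x y)))"
      unfolding kl_div_def
    proof (rule sum.cong[OF refl])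
      fix y show "(if V x y = 0 then 0 else if W x y = 0 then \<infinity> else ereal (V x y * ln (V x y / W x y))) =
         ereal (if V x y = 0 then 0 else V x y * ln (V x y / W x y))"
        using assms(1) qp by (cases "V x y = 0") (auto simp: zero_ereal_def)
    qed
    also have "\<dots> = ereal (kl (V x) (W x))" unfolding kl_def by (rule sum_ereal)
    finally show ?thesis by simp
  qed
  then have "cond_div V W Q = (\<Sum>x\<in>UNIV. ereal (Q x * kl (V x) (W x)))"
    unfolding cond_div_def by (rule sum.cong[OF refl])
  also have "\<dots> = ereal (\<Sum>x\<in>UNIV. Q x * kl (V x) (W x))" by (rule sum_ereal)
  finally show ?thesis .
qed

lemma cond_div_inf:
  assumes "Q x > 0" "V x y \<noteq> 0" "W x y = 0"
  shows "cond_div V W Q = \<infinity>"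
proof -
  have "kl_div (V x) (W x) = \<infinity>" unfolding kl_div_def sum_Pinfty
    using assms by (auto intro!: bexI[of _ y])
  then have "ereal (Q x) * kl_div (V x) (W x) = \<infinity>" using assms(1) by simp
  then show ?thesis unfolding cond_div_def sum_Pinfty by auto
qed

lemma gibbs_aux:
  fixes v u :: "'y::finite \<Rightarrow> real"
  assumes v0: "\<forall>y. v y \<ge> 0" and v1: "sum v UNIV = 1" and u0: "\<forall>y. u y \<ge> 0"
    and vu: "\<forall>y. v y > 0 \<longrightarrow> u y > 0"
  defines "S \<equiv> sum u UNIV"
  defines "e \<equiv> \<lambda>y. if v y = 0 then u y / S else v y * ln (v y * S / u y) + u y / S - v y"
  shows "S > 0" "\<forall>y. e y \<ge> 0" "sum e UNIV = kl v u + ln S"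
proof -
  obtain y0 where "v y0 \<noteq> 0" using v1 by (metis sum.neutral zero_neq_one)
  then have "v y0 > 0" using v0 by (simp add: order_less_le)
  then have "u y0 > 0" using vu by blast
  then show S: "S > 0" unfolding S_def
    by (metis (no_types, lifting) UNIV_I finite_class.finite_UNIV order_less_le_trans
        member_le_sum u0)
  show "\<forall>y. e y \<ge> 0"
  proof
    fix y
    show "e y \<ge> 0"
    proof (cases "v y = 0")
      case True then show ?thesis unfolding e_def using u0 S by simp
    next
      case False
      then have vp: "v y > 0" using v0 by (simp add: order_less_le)
      then have up: "u y > 0" using vu by blast
      define z where "z = u y / (v y * S)"
      have zp: "z > 0" unfolding z_def using vp up S by simp
      have l: "ln (v y * S / u y) = - ln z" unfolding z_def using vp up S
        by (simp add: ln_div)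
      have uz: "u y / S = v y * z" unfolding z_def using vp S by simp
      have "e y = v y * ln (v y * S / u y) + u y / S - v y" using False by (simp add: e_def)
      also have "\<dots> = v y * (z - 1 - ln z)" unfolding l uz by (simp add: algebra_simps)
      finally have "e y = v y * (z - 1 - ln z)" .
      moreover have "z - 1 - ln z \<ge> 0" using ln_le_minus_one[OF zp] by simp
      ultimately show ?thesis using vp by simp
    qed
  qed
  have "e y = (if v y = 0 then 0 else v y * ln (v y / u y)) + v y * ln S + u y / S - v y" for y
  proof (cases "v y = 0")
    case True then show ?thesis unfolding e_def by simp
  next
    case False
    then have vp: "v y > 0" using v0 by (simp add: order_less_le)
    then have up: "u y > 0" using vu by blast
    have l: "ln (v y * S / u y) = ln (v y / u y) + ln S" using vp up S
      by (simp add: ln_mult ln_div)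
    have "e y = v y * ln (v y * S / u y) + u y / S - v y" using False by (simp add: e_def)
    also have "\<dots> = v y * ln (v y / u y) + v y * ln S + u y / S - v y" unfolding l
      by (simp add: distrib_left)
    finally show ?thesis using False by simp
  qed
  note ee = this
  have "sum e UNIV = (\<Sum>y\<in>UNIV. (if v y = 0 then 0 else v y * ln (v y / u y)) + v y * ln S + u y / S - v y)"
    using ee by (intro sum.cong) auto
  also have "\<dots> = kl v u + (\<Sum>y\<in>UNIV. v y) * ln S + (\<Sum>y\<in>UNIV. u y) / S - (\<Sum>y\<in>UNIV. v y)"
    unfolding kl_def sum_subtractf sum.distrib sum_distrib_right sum_divide_distrib ..
  also have "\<dots> = kl v u + ln S" using v1 S unfolding S_def by simp
  finally show "sum e UNIV = kl v u + ln S" .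
qed

lemma gibbs:
  fixes v u :: "'y::finite \<Rightarrow> real"
  assumes "\<forall>y. v y \<ge> 0" "sum v UNIV = 1" "\<forall>y. u y \<ge> 0" "\<forall>y. v y > 0 \<longrightarrow> u y > 0"
  shows "- ln (sum u UNIV) \<le> kl v u"
proof -
  note g = gibbs_aux[OF assms]
  have "0 \<le> (\<Sum>y\<in>UNIV. (\<lambda>y. if v y = 0 then u y / sum u UNIV
      else v y * ln (v y * sum u UNIV / u y) + u y / sum u UNIV - v y) y)"
    by (rule sum_nonneg) (use g(2) in blast)
  then show ?thesis using g(3) by linarith
qed

lemma gibbs_eq:
  fixes v u :: "'y::finite \<Rightarrow> real"
  assumes v0: "\<forall>y. v y \<ge> 0" and v1: "sum v UNIV = 1" and u0: "\<forall>y. u y \<ge> 0"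
    and vu: "\<forall>y. v y > 0 \<longrightarrow> u y > 0"
    and eq: "kl v u = - ln (sum u UNIV)"
  shows "v y = u y / sum u UNIV"
proof -
  define S where "S = sum u UNIV"
  define e where "e = (\<lambda>y. if v y = 0 then u y / S else v y * ln (v y * S / u y) + u y / S - v y)"
  note g = gibbs_aux[OF v0 v1 u0 vu, folded S_def, folded e_def]
  have e0: "\<forall>y. 0 \<le> e y" using g(2) unfolding e_def by blast
  have "sum e UNIV = 0" using g(3) eq S_def unfolding e_def by simp
  then have "e y = 0" using sum_nonneg_eq_0_iff[of UNIV e] e0 by simp
  show ?thesis
  proof (cases "v y = 0")
    case True
    then have "u y = 0" using \<open>e y = 0\<close> g(1) unfolding e_def by simp
    then show ?thesis using True S_def by simp
  next
    case False
    then have vp: "v y > 0" using v0 by (simp add: order_less_le)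
    then have up: "u y > 0" using vu by blast
    define z where "z = u y / (v y * S)"
    have zp: "z > 0" unfolding z_def using vp up g(1) by simp
    have l: "ln (v y * S / u y) = - ln z" unfolding z_def using vp up g(1)
      by (simp add: ln_div)
    have uz: "u y / S = v y * z" unfolding z_def using vp g(1) by simp
    have "e y = v y * ln (v y * S / u y) + u y / S - v y" using False by (simp add: e_def)
    also have "\<dots> = v y * (z - 1 - ln z)" unfolding l uz by (simp add: algebra_simps)
    finally have "e y = v y * (z - 1 - ln z)" .
    then have "ln z = z - 1" using \<open>e y = 0\<close> vp by simp
    then have "z = 1" using ln_eq_minus_one[OF zp] by simp
    then show ?thesis unfolding z_def S_def using vp g(1) S_def by (simp add: field_simps)
  qed
qed

lemma young:
  fixes a b s :: real
  assumes "0 \<le> a" "0 \<le> b" "0 < s" "s \<le> 1"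
  shows "a powr s * rpow b (1 - s) \<le> s * a + (1 - s) * b"
    and "s < 1 \<Longrightarrow> a powr s * rpow b (1 - s) = s * a + (1 - s) * b \<Longrightarrow> a = b"
proof -
  have main: "a powr s * b powr (1 - s) \<le> s * a + (1 - s) * b \<and>
      (a powr s * b powr (1 - s) = s * a + (1 - s) * b \<longrightarrow> a = b)" if s1: "s < 1"
  proof (cases "a = 0 \<or> b = 0")
    case True
    then show ?thesis using assms s1 by (auto simp: mult_nonneg_nonneg)
  next
    case False
    then have ap: "a > 0" and bp: "b > 0" using assms by auto
    define m where "m = s * a + (1 - s) * b"
    have mp: "m > 0" unfolding m_def using ap bp assms s1
      by (smt (verit) mult_pos_pos)
    have la: "ln (a / m) \<le> a / m - 1" using ln_le_minus_one ap mp by simp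
    have lb: "ln (b / m) \<le> b / m - 1" using ln_le_minus_one bp mp by simp
    have sum0: "s * (a / m - 1) + (1 - s) * (b / m - 1) = 0"
      unfolding m_def using mp[unfolded m_def] by (simp add: field_simps)
    have key: "s * ln a + (1 - s) * ln b - ln m
        = s * (ln (a / m) - (a / m - 1)) + (1 - s) * (ln (b / m) - (b / m - 1))"
      using sum0 ap bp mp by (simp add: ln_div algebra_simps)
    have le: "s * ln a + (1 - s) * ln b \<le> ln m"
      using key la lb assms s1
      by (smt (verit, best) mult_nonneg_nonpos)
    have eqp: "a powr s * b powr (1 - s) = exp (s * ln a + (1 - s) * ln b)"
      using ap bp by (simp add: powr_def exp_add)
    have "a powr s * b powr (1 - s) \<le> m"
      using le mp eqp by (metis exp_le_cancel_iff exp_ln)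
    moreover have "a = b" if e: "a powr s * b powr (1 - s) = m"
    proof -
      have "s * ln a + (1 - s) * ln b = ln m" using e eqp mp by (metis ln_exp)
      then have z: "s * (ln (a / m) - (a / m - 1)) + (1 - s) * (ln (b / m) - (b / m - 1)) = 0"
        using key by simp
      have "s * (ln (a / m) - (a / m - 1)) \<le> 0" using la assms by (simp add: mult_nonneg_nonpos)
      moreover have "(1 - s) * (ln (b / m) - (b / m - 1)) \<le> 0" using lb s1 by (simp add: mult_nonneg_nonpos)
      ultimately have "s * (ln (a / m) - (a / m - 1)) = 0" "(1 - s) * (ln (b / m) - (b / m - 1)) = 0"
        using z by linarith+
      then have "ln (a / m) = a / m - 1" "ln (b / m) = b / m - 1" using assms s1 by auto
      then have "a / m = 1" "b / m = 1" using ln_eq_minus_one[of "a/m"] ln_eq_minus_one[of "b/m"] ap bp mp by auto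
      then show "a = b" by (simp add: divide_eq_1_iff)
    qed
    ultimately show ?thesis unfolding m_def by blast
  qed
  show "a powr s * rpow b (1 - s) \<le> s * a + (1 - s) * b"
  proof (cases "s = 1")
    case True then show ?thesis using assms by (simp add: rpow_def)
  next
    case False
    then show ?thesis using main assms by (simp add: rpow_def)
  qed
  show "a = b" if "s < 1" "a powr s * rpow b (1 - s) = s * a + (1 - s) * b"
    using main that by (simp add: rpow_def)
qed

lemma jensen_ln:
  fixes Q a :: "'x::finite \<Rightarrow> real"
  assumes Q: "pdist Q" and ap: "\<forall>x. Q x > 0 \<longrightarrow> a x > 0"
  shows "(\<Sum>x\<in>UNIV. Q x * ln (a x)) \<le> ln (\<Sum>x\<in>UNIV. Q x * a x)"
    and "(\<Sum>x\<in>UNIV. Q x * a x) > 0"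
proof -
  obtain x0 where "Q x0 \<noteq> 0" using pdist_sum[OF Q] by (metis sum.neutral zero_neq_one)
  then have q0: "Q x0 > 0" using pdist_nonneg[OF Q, of x0] by simp
  have nn: "\<forall>x. Q x * a x \<ge> 0" using ap pdist_nonneg[OF Q]
    by (metis less_eq_real_def mult_eq_0_iff mult_nonneg_nonneg)
  have "Q x0 * a x0 \<le> (\<Sum>x\<in>UNIV. Q x * a x)" by (rule member_le_sum) (use nn in auto)
  moreover have "Q x0 * a x0 > 0" using q0 ap by simp
  ultimately show A: "(\<Sum>x\<in>UNIV. Q x * a x) > 0" by linarith
  define A where "A = (\<Sum>x\<in>UNIV. Q x * a x)"
  have Ap: "A > 0" using A A_def by simp
  have t: "Q x * ln (a x) - Q x * ln A \<le> Q x * (a x / A) - Q x" for x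
  proof (cases "Q x = 0")
    case True then show ?thesis by simp
  next
    case False
    then have "Q x > 0" using pdist_nonneg[OF Q, of x] by simp
    then have apos: "a x > 0" using ap by blast
    have "ln (a x / A) \<le> a x / A - 1" using ln_le_minus_one apos Ap by simp
    then have "Q x * ln (a x / A) \<le> Q x * (a x / A - 1)" using \<open>Q x > 0\<close> by simp
    then show ?thesis using apos Ap by (simp add: ln_div algebra_simps)
  qed
  have "(\<Sum>x\<in>UNIV. Q x * ln (a x)) - (\<Sum>x\<in>UNIV. Q x) * ln A
       \<le> (\<Sum>x\<in>UNIV. Q x * a x) / A - (\<Sum>x\<in>UNIV. Q x)"
    using sum_mono[of UNIV "\<lambda>x. Q x * ln (a x) - Q x * ln A" "\<lambda>x. Q x * (a x / A) - Q x", OF t]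
    by (simp add: sum_subtractf sum_distrib_right sum_divide_distrib)
  then show "(\<Sum>x\<in>UNIV. Q x * ln (a x)) \<le> ln (\<Sum>x\<in>UNIV. Q x * a x)"
    using pdist_sum[OF Q] Ap unfolding A_def by simp
qed


lemma rpow_nonneg: "0 \<le> b \<Longrightarrow> 0 \<le> rpow b t" unfolding rpow_def by simp
lemma rpow_pos: "0 < b \<Longrightarrow> 0 < rpow b t" unfolding rpow_def by simp
lemma ln_rpow: "0 < b \<Longrightarrow> ln (rpow b t) = t * ln b" unfolding rpow_def by simp
lemma rpow_pos_eq: "0 < b \<Longrightarrow> rpow b t = b powr t" unfolding rpow_def by simp

definition alpha :: "('x::finite \<Rightarrow> 'y::finite \<Rightarrow> real) \<Rightarrow> real \<Rightarrow> ('x \<Rightarrow> real) \<Rightarrow> 'y \<Rightarrow> real" where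
  "alpha W \<rho> Q y = (\<Sum>x\<in>UNIV. Q x * W x y powr (1 / (1 + \<rho>)))"

definition Zf :: "('x::finite \<Rightarrow> 'y::finite \<Rightarrow> real) \<Rightarrow> real \<Rightarrow> ('x \<Rightarrow> real) \<Rightarrow> real" where
  "Zf W \<rho> Q = (\<Sum>y\<in>UNIV. alpha W \<rho> Q y powr (1 + \<rho>))"

lemma E_o_Zf: "E_o W \<rho> Q = - ln (Zf W \<rho> Q)"
  unfolding E_o_def Zf_def alpha_def ..

lemma alpha_nonneg: "pdist Q \<Longrightarrow> 0 \<le> alpha W \<rho> Q y"
  unfolding alpha_def by (auto intro!: sum_nonneg simp: pdist_nonneg)

lemma st_facts:
  fixes \<rho> :: real assumes "0 \<le> \<rho>"
  shows "(1 + \<rho>) * (1 / (1 + \<rho>)) = 1" "(1 + \<rho>) * (\<rho> / (1 + \<rho>)) = \<rho>"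
    "\<rho> / (1 + \<rho>) = 1 - 1 / (1 + \<rho>)" "0 < 1 / (1 + \<rho>)" "1 / (1 + \<rho>) \<le> 1"
    "0 < \<rho> \<Longrightarrow> 1 / (1 + \<rho>) < 1"
  using assms by (auto simp: field_simps)

lemma JY:
  fixes W :: "'x::finite \<Rightarrow> 'y::finite \<Rightarrow> real"
  assumes W: "channel W" and Q: "pdist Q" and p: "pdist p" and r: "0 \<le> \<rho>"
    and apos: "\<forall>x. Q x > 0 \<longrightarrow> (\<Sum>y\<in>UNIV. W x y powr (1 / (1 + \<rho>)) * rpow (p y) (\<rho> / (1 + \<rho>))) > 0"
  shows "E_o W \<rho> Q \<le> - (1 + \<rho>) * (\<Sum>x\<in>UNIV. Q x * ln (\<Sum>y\<in>UNIV. W x y powr (1 / (1 + \<rho>)) * rpow (p y) (\<rho> / (1 + \<rho>))))"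
    and "0 < \<rho> \<Longrightarrow> E_o W \<rho> Q = - (1 + \<rho>) * (\<Sum>x\<in>UNIV. Q x * ln (\<Sum>y\<in>UNIV. W x y powr (1 / (1 + \<rho>)) * rpow (p y) (\<rho> / (1 + \<rho>))))
       \<Longrightarrow> p y = alpha W \<rho> Q y powr (1 + \<rho>) / Zf W \<rho> Q"
proof -
  define s where "s = 1 / (1 + \<rho>)"
  define t where "t = \<rho> / (1 + \<rho>)"
  define a where "a = (\<lambda>x. \<Sum>y\<in>UNIV. W x y powr s * rpow (p y) t)"
  define Z where "Z = Zf W \<rho> Q"
  define A where "A = (\<lambda>y. alpha W \<rho> Q y powr (1 + \<rho>) / Z)"
  have s0: "0 < s" "s \<le> 1" and ts: "t = 1 - s" and s1: "(1 + \<rho>) * s = 1"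
    using st_facts[OF r] unfolding s_def t_def by auto
  have ap: "\<forall>x. Q x > 0 \<longrightarrow> a x > 0" using apos unfolding a_def s_def t_def .
  note J = jensen_ln[OF Q ap]
  have swap: "(\<Sum>x\<in>UNIV. Q x * a x) = (\<Sum>y\<in>UNIV. alpha W \<rho> Q y * rpow (p y) t)"
  proof -
    have "(\<Sum>x\<in>UNIV. Q x * a x) = (\<Sum>x\<in>UNIV. \<Sum>y\<in>UNIV. Q x * (W x y powr s * rpow (p y) t))"
      unfolding a_def by (simp add: sum_distrib_left)
    also have "\<dots> = (\<Sum>y\<in>UNIV. \<Sum>x\<in>UNIV. Q x * (W x y powr s * rpow (p y) t))" by (rule sum.swap)
    also have "\<dots> = (\<Sum>y\<in>UNIV. alpha W \<rho> Q y * rpow (p y) t)"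
      unfolding alpha_def s_def[symmetric] sum_distrib_right by (simp add: mult.assoc)
    finally show ?thesis .
  qed
  have al0: "\<And>y. 0 \<le> alpha W \<rho> Q y" using alpha_nonneg[OF Q] .
  obtain y0 where "alpha W \<rho> Q y0 * rpow (p y0) t \<noteq> 0"
    using J(2) unfolding swap by (metis (no_types, lifting) less_irrefl sum.neutral)
  then have "alpha W \<rho> Q y0 > 0" using al0 by (simp add: order_less_le)
  then have "alpha W \<rho> Q y0 powr (1 + \<rho>) > 0" by simp
  moreover have "alpha W \<rho> Q y0 powr (1 + \<rho>) \<le> Z" unfolding Z_def Zf_def
    by (rule member_le_sum) auto
  ultimately have Zp: "Z > 0" by linarith
  have A0: "0 \<le> A y" for y unfolding A_def using Zp by simp
  have sumA: "(\<Sum>y\<in>UNIV. A y) = 1" unfolding A_def Z_def Zf_def using Zp[unfolded Z_def Zf_def]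
    by (simp add: sum_divide_distrib[symmetric])
  have term_eq: "alpha W \<rho> Q y * rpow (p y) t = Z powr s * (A y powr s * rpow (p y) (1 - s))" for y
  proof -
    have "A y powr s = (alpha W \<rho> Q y powr (1 + \<rho>)) powr s / Z powr s"
      unfolding A_def by (simp add: powr_divide)
    also have "\<dots> = alpha W \<rho> Q y / Z powr s"
      using s1 al0[of y] by (simp add: powr_powr)
    finally have "A y powr s = alpha W \<rho> Q y / Z powr s" .
    then show ?thesis using Zp ts by simp
  qed
  define g where "g = (\<lambda>y. Z powr s * (s * A y + (1 - s) * p y) - alpha W \<rho> Q y * rpow (p y) t)"
  have g0: "0 \<le> g y" for y
  proof -
    have "A y powr s * rpow (p y) (1 - s) \<le> s * A y + (1 - s) * p y"
      using young(1)[OF A0 pdist_nonneg[OF p] s0] .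
    then show ?thesis unfolding g_def term_eq by (simp add: mult_left_mono)
  qed
  have sumg: "(\<Sum>y\<in>UNIV. g y) = Z powr s - (\<Sum>x\<in>UNIV. Q x * a x)"
  proof -
    have "(\<Sum>y\<in>UNIV. g y) = Z powr s * (s * (\<Sum>y\<in>UNIV. A y) + (1 - s) * (\<Sum>y\<in>UNIV. p y))
        - (\<Sum>y\<in>UNIV. alpha W \<rho> Q y * rpow (p y) t)"
      unfolding g_def sum_subtractf sum_distrib_left[symmetric] sum.distrib
      by (simp add: sum_distrib_left)
    then show ?thesis using sumA pdist_sum[OF p] swap by simp
  qed
  have le1: "(\<Sum>x\<in>UNIV. Q x * a x) \<le> Z powr s" using sumg sum_nonneg[of UNIV g] g0 by force
  have lnZ: "ln (Z powr s) = s * ln Z" using Zp by simp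
  have le2: "(\<Sum>x\<in>UNIV. Q x * ln (a x)) \<le> s * ln Z"
    using J(1) ln_le_cancel_iff[OF J(2), of "Z powr s"] le1 Zp lnZ by simp
  have Eo: "E_o W \<rho> Q = - ln Z" unfolding E_o_Zf Z_def ..
  have s1l: "(1 + \<rho>) * (s * ln Z) = ln Z" by (simp only: mult.assoc[symmetric] s1 mult_1)
  have "- ln Z = - (1 + \<rho>) * (s * ln Z)" using s1l by (metis minus_mult_left)
  also have "\<dots> \<le> - (1 + \<rho>) * (\<Sum>x\<in>UNIV. Q x * ln (a x))" using le2 r by (simp add: mult_left_mono)
  finally show "E_o W \<rho> Q \<le> - (1 + \<rho>) * (\<Sum>x\<in>UNIV. Q x * ln (\<Sum>y\<in>UNIV. W x y powr (1 / (1 + \<rho>)) * rpow (p y) (\<rho> / (1 + \<rho>))))"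
    unfolding Eo a_def s_def t_def .
  assume rp: "0 < \<rho>" and eq: "E_o W \<rho> Q = - (1 + \<rho>) * (\<Sum>x\<in>UNIV. Q x * ln (\<Sum>y\<in>UNIV. W x y powr (1 / (1 + \<rho>)) * rpow (p y) (\<rho> / (1 + \<rho>))))"
  have "- ln Z = - (1 + \<rho>) * (\<Sum>x\<in>UNIV. Q x * ln (a x))" using eq unfolding Eo a_def s_def t_def .
  then have "(1 + \<rho>) * (\<Sum>x\<in>UNIV. Q x * ln (a x)) = ln Z" by (metis minus_mult_left neg_equal_iff_equal)
  then have "(1 + \<rho>) * (\<Sum>x\<in>UNIV. Q x * ln (a x)) = (1 + \<rho>) * (s * ln Z)" using s1l by (rule trans[OF _ sym])
  then have "(\<Sum>x\<in>UNIV. Q x * ln (a x)) = s * ln Z" using mult_left_cancel[of "1 + \<rho>"] rp by simp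
  then have "s * ln Z \<le> ln (\<Sum>x\<in>UNIV. Q x * a x)" using J(1) by simp
  then have "Z powr s \<le> (\<Sum>x\<in>UNIV. Q x * a x)" using lnZ Zp J(2)
    by (metis ln_le_cancel_iff powr_gt_zero less_irrefl)
  then have "(\<Sum>y\<in>UNIV. g y) = 0" using sumg le1 by simp
  then have "g y = 0" using sum_nonneg_eq_0_iff[of UNIV g] g0 by simp
  then have "A y powr s * rpow (p y) (1 - s) = s * A y + (1 - s) * p y"
    unfolding g_def term_eq using Zp by simp
  moreover have "s < 1" using st_facts(6)[OF r rp] unfolding s_def .
  ultimately have "A y = p y" using young(2)[OF A0 pdist_nonneg[OF p] s0] by blast
  then show "p y = alpha W \<rho> Q y powr (1 + \<rho>) / Zf W \<rho> Q" unfolding A_def Z_def by simp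
qed


definition uvec :: "('x::finite \<Rightarrow> 'y::finite \<Rightarrow> real) \<Rightarrow> real \<Rightarrow> ('y \<Rightarrow> real) \<Rightarrow> 'x \<Rightarrow> 'y \<Rightarrow> real" where
  "uvec W \<rho> p x y = W x y powr (1 / (1 + \<rho>)) * rpow (p y) (\<rho> / (1 + \<rho>))"

lemma uvec_nonneg: "pdist p \<Longrightarrow> 0 \<le> uvec W \<rho> p x y"
  unfolding uvec_def by (simp add: rpow_nonneg pdist_nonneg)

lemma WD_main:
  fixes W V :: "'x::finite \<Rightarrow> 'y::finite \<Rightarrow> real"
  assumes W: "channel W" and V: "channel V" and Q: "pdist Q" and r: "0 \<le> \<rho>"
    and ac: "\<forall>x y. Q x > 0 \<longrightarrow> V x y \<noteq> 0 \<longrightarrow> W x y \<noteq> 0"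
  defines "p \<equiv> pout Q V"
  shows "\<forall>x. Q x > 0 \<longrightarrow> sum (uvec W \<rho> p x) UNIV > 0"
    and "\<forall>x. Q x > 0 \<longrightarrow> - ln (sum (uvec W \<rho> p x) UNIV) \<le> kl (V x) (uvec W \<rho> p x)"
    and "\<forall>x. Q x > 0 \<longrightarrow> kl (V x) (W x) + \<rho> * kl (V x) p = (1 + \<rho>) * kl (V x) (uvec W \<rho> p x)"
    and "(\<Sum>x\<in>UNIV. Q x * kl (V x) (W x)) + \<rho> * mutual_info Q V
          = (\<Sum>x\<in>UNIV. Q x * ((1 + \<rho>) * kl (V x) (uvec W \<rho> p x)))"
    and "\<forall>x y. Q x > 0 \<longrightarrow> V x y > 0 \<longrightarrow> uvec W \<rho> p x y > 0"
proof -
  have p: "pdist p" unfolding p_def using pout_pdist[OF Q V] .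
  have up: "uvec W \<rho> p x y > 0" if "Q x > 0" "V x y > 0" for x y
  proof -
    have "W x y \<noteq> 0" using ac that by auto
    then have "W x y powr (1 / (1 + \<rho>)) > 0" by simp
    moreover have "p y > 0" unfolding p_def using pout_pos[OF Q V that] .
    then have "rpow (p y) (\<rho> / (1 + \<rho>)) > 0" by (rule rpow_pos)
    ultimately show ?thesis unfolding uvec_def by simp
  qed
  then show "\<forall>x y. Q x > 0 \<longrightarrow> V x y > 0 \<longrightarrow> uvec W \<rho> p x y > 0" by blast
  show A: "\<forall>x. Q x > 0 \<longrightarrow> sum (uvec W \<rho> p x) UNIV > 0"
  proof (intro allI impI)
    fix x assume qx: "Q x > 0"
    obtain y where "V x y \<noteq> 0" using channel_sum[OF V, of x] by (metis sum.neutral zero_neq_one)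
    then have vy: "V x y > 0" using channel_nonneg[OF V, of x y] by simp
    have "uvec W \<rho> p x y \<le> sum (uvec W \<rho> p x) UNIV"
      by (rule member_le_sum) (auto simp: uvec_nonneg[OF p])
    then show "sum (uvec W \<rho> p x) UNIV > 0" using up[OF qx vy] by linarith
  qed
  show "\<forall>x. Q x > 0 \<longrightarrow> - ln (sum (uvec W \<rho> p x) UNIV) \<le> kl (V x) (uvec W \<rho> p x)"
  proof (intro allI impI)
    fix x assume qx: "Q x > 0"
    show "- ln (sum (uvec W \<rho> p x) UNIV) \<le> kl (V x) (uvec W \<rho> p x)"
      by (rule gibbs) (use channel_nonneg[OF V] channel_sum[OF V] uvec_nonneg[OF p] up[OF qx] in auto)
  qed
  have B: "kl (V x) (W x) + \<rho> * kl (V x) p = (1 + \<rho>) * kl (V x) (uvec W \<rho> p x)" if qx: "Q x > 0" for x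
  proof -
    have "(if V x y = 0 then 0 else V x y * ln (V x y / W x y)) + \<rho> * (if V x y = 0 then 0 else V x y * ln (V x y / p y))
        = (1 + \<rho>) * (if V x y = 0 then 0 else V x y * ln (V x y / uvec W \<rho> p x y))" for y
    proof (cases "V x y = 0")
      case True then show ?thesis by simp
    next
      case False
      then have vy: "V x y > 0" using channel_nonneg[OF V, of x y] by simp
      have "W x y \<noteq> 0" using ac qx False by blast
      then have wy: "W x y > 0" using channel_nonneg[OF W, of x y] by simp
      have py: "p y > 0" unfolding p_def using pout_pos[OF Q V qx vy] .
      have "ln (uvec W \<rho> p x y) = (1 / (1 + \<rho>)) * ln (W x y) + (\<rho> / (1 + \<rho>)) * ln (p y)"
      proof -
        have rp': "rpow (p y) (\<rho> / (1 + \<rho>)) > 0" by (rule rpow_pos[OF py])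
        show ?thesis unfolding uvec_def using wy py rp' by (simp add: ln_mult ln_rpow[OF py])
      qed
      then have "(1 + \<rho>) * ln (uvec W \<rho> p x y) = ((1 + \<rho>) * (1 / (1 + \<rho>))) * ln (W x y) + ((1 + \<rho>) * (\<rho> / (1 + \<rho>))) * ln (p y)"
        by (simp only: distrib_left mult.assoc)
      then have "(1 + \<rho>) * ln (uvec W \<rho> p x y) = ln (W x y) + \<rho> * ln (p y)"
        unfolding st_facts(1,2)[OF r] by simp
      then have VL: "V x y * ((1 + \<rho>) * ln (uvec W \<rho> p x y)) = V x y * (ln (W x y) + \<rho> * ln (p y))"
        by simp
      show ?thesis using vy wy py up[OF qx vy] False VL
        by (simp add: ln_div algebra_simps)
    qed
    note eqy = this
    have "kl (V x) (W x) + \<rho> * kl (V x) p = (\<Sum>y\<in>UNIV. (if V x y = 0 then 0 else V x y * ln (V x y / W x y)) + \<rho> * (if V x y = 0 then 0 else V x y * ln (V x y / p y)))"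
      unfolding kl_def sum_distrib_left sum.distrib ..
    also have "\<dots> = (\<Sum>y\<in>UNIV. (1 + \<rho>) * (if V x y = 0 then 0 else V x y * ln (V x y / uvec W \<rho> p x y)))"
      by (rule sum.cong[OF refl]) (rule eqy)
    also have "\<dots> = (1 + \<rho>) * kl (V x) (uvec W \<rho> p x)" unfolding kl_def sum_distrib_left ..
    finally show ?thesis .
  qed
  then show "\<forall>x. Q x > 0 \<longrightarrow> kl (V x) (W x) + \<rho> * kl (V x) p = (1 + \<rho>) * kl (V x) (uvec W \<rho> p x)"
    by blast
  have "(\<Sum>x\<in>UNIV. Q x * kl (V x) (W x)) + \<rho> * mutual_info Q V
      = (\<Sum>x\<in>UNIV. Q x * (kl (V x) (W x) + \<rho> * kl (V x) p))"
    unfolding mi_eq p_def by (simp add: sum.distrib sum_distrib_left algebra_simps)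
  also have "\<dots> = (\<Sum>x\<in>UNIV. Q x * ((1 + \<rho>) * kl (V x) (uvec W \<rho> p x)))"
  proof (rule sum.cong[OF refl])
    fix x show "Q x * (kl (V x) (W x) + \<rho> * kl (V x) p) = Q x * ((1 + \<rho>) * kl (V x) (uvec W \<rho> p x))"
      using B[of x] pdist_nonneg[OF Q, of x] by (cases "Q x = 0") auto
  qed
  finally show "(\<Sum>x\<in>UNIV. Q x * kl (V x) (W x)) + \<rho> * mutual_info Q V
          = (\<Sum>x\<in>UNIV. Q x * ((1 + \<rho>) * kl (V x) (uvec W \<rho> p x)))" .
qed

lemma WD_real:
  fixes W V :: "'x::finite \<Rightarrow> 'y::finite \<Rightarrow> real"
  assumes W: "channel W" and V: "channel V" and Q: "pdist Q" and r: "0 \<le> \<rho>"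
    and ac: "\<forall>x y. Q x > 0 \<longrightarrow> V x y \<noteq> 0 \<longrightarrow> W x y \<noteq> 0"
  shows "E_o W \<rho> Q - \<rho> * mutual_info Q V \<le> (\<Sum>x\<in>UNIV. Q x * kl (V x) (W x))"
    and "0 < \<rho> \<Longrightarrow> E_o W \<rho> Q - \<rho> * mutual_info Q V = (\<Sum>x\<in>UNIV. Q x * kl (V x) (W x))
          \<Longrightarrow> pout Q V y = alpha W \<rho> Q y powr (1 + \<rho>) / Zf W \<rho> Q"
    and "0 < \<rho> \<Longrightarrow> E_o W \<rho> Q - \<rho> * mutual_info Q V = (\<Sum>x\<in>UNIV. Q x * kl (V x) (W x))
          \<Longrightarrow> Q x > 0 \<Longrightarrow> V x y = uvec W \<rho> (pout Q V) x y / sum (uvec W \<rho> (pout Q V) x) UNIV"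
proof -
  define p where "p = pout Q V"
  have p: "pdist p" unfolding p_def using pout_pdist[OF Q V] .
  note M = WD_main[OF W V Q r ac, folded p_def]
  define a where "a = (\<lambda>x. sum (uvec W \<rho> p x) UNIV)"
  have ap: "\<forall>x. Q x > 0 \<longrightarrow> (\<Sum>y\<in>UNIV. W x y powr (1 / (1 + \<rho>)) * rpow (p y) (\<rho> / (1 + \<rho>))) > 0"
    using M(1) unfolding uvec_def .
  have aeq: "a x = (\<Sum>y\<in>UNIV. W x y powr (1 / (1 + \<rho>)) * rpow (p y) (\<rho> / (1 + \<rho>)))" for x
    unfolding a_def uvec_def ..
  note J = JY[OF W Q p r ap, folded aeq]
  define G where "G = (\<lambda>x. Q x * ((1 + \<rho>) * (kl (V x) (uvec W \<rho> p x) + ln (a x))))"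
  have G0: "0 \<le> G x" for x
  proof (cases "Q x > 0")
    case True
    have "0 \<le> kl (V x) (uvec W \<rho> p x) + ln (a x)" using M(2) True unfolding a_def by force
    then show ?thesis using r True unfolding G_def by simp
  next
    case False
    then have "Q x = 0" using pdist_nonneg[OF Q, of x] by simp
    then show ?thesis unfolding G_def by simp
  qed
  have decomp: "(\<Sum>x\<in>UNIV. Q x * kl (V x) (W x)) + \<rho> * mutual_info Q V - E_o W \<rho> Q
      = (\<Sum>x\<in>UNIV. G x) + (- (1 + \<rho>) * (\<Sum>x\<in>UNIV. Q x * ln (a x)) - E_o W \<rho> Q)"
  proof -
    have g: "G x = Q x * ((1 + \<rho>) * kl (V x) (uvec W \<rho> p x)) + (1 + \<rho>) * (Q x * ln (a x))" for x
      unfolding G_def by (simp add: algebra_simps)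
    have sg: "sum G UNIV = (\<Sum>x\<in>UNIV. Q x * ((1 + \<rho>) * kl (V x) (uvec W \<rho> p x))) + (1 + \<rho>) * (\<Sum>x\<in>UNIV. Q x * ln (a x))"
      unfolding g sum.distrib sum_distrib_left ..
    have neg: "- (1 + \<rho>) * (\<Sum>x\<in>UNIV. Q x * ln (a x)) = - ((1 + \<rho>) * (\<Sum>x\<in>UNIV. Q x * ln (a x)))" by (simp only: mult_minus_left)
    show ?thesis using M(4) sg neg by linarith
  qed
  have J0: "0 \<le> - (1 + \<rho>) * (\<Sum>x\<in>UNIV. Q x * ln (a x)) - E_o W \<rho> Q" using J(1) by simp
  show "E_o W \<rho> Q - \<rho> * mutual_info Q V \<le> (\<Sum>x\<in>UNIV. Q x * kl (V x) (W x))"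
    using decomp J0 sum_nonneg[of UNIV G] G0 by force
  assume rp: "0 < \<rho>" and eq: "E_o W \<rho> Q - \<rho> * mutual_info Q V = (\<Sum>x\<in>UNIV. Q x * kl (V x) (W x))"
  have both: "(\<Sum>x\<in>UNIV. G x) = 0" "- (1 + \<rho>) * (\<Sum>x\<in>UNIV. Q x * ln (a x)) - E_o W \<rho> Q = 0"
    using decomp eq J0 sum_nonneg[of UNIV G] G0 by force+
  show "pout Q V y = alpha W \<rho> Q y powr (1 + \<rho>) / Zf W \<rho> Q"
    using J(2)[OF rp] both(2) unfolding p_def by simp
  assume qx: "Q x > 0"
  have "G x = 0" using both(1) sum_nonneg_eq_0_iff[of UNIV G] G0 by simp
  then have "kl (V x) (uvec W \<rho> p x) = - ln (sum (uvec W \<rho> p x) UNIV)"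
    unfolding G_def a_def using qx r by simp
  then show "V x y = uvec W \<rho> (pout Q V) x y / sum (uvec W \<rho> (pout Q V) x) UNIV"
    unfolding p_def[symmetric]
    by (intro gibbs_eq) (use channel_nonneg[OF V] channel_sum[OF V] uvec_nonneg[OF p] M(1) M(5) qx in auto)
qed


lemma WD_ereal:
  fixes W V :: "'x::finite \<Rightarrow> 'y::finite \<Rightarrow> real"
  assumes W: "channel W" and V: "channel V" and Q: "pdist Q" and r: "0 \<le> \<rho>"
  shows "ereal (E_o W \<rho> Q - \<rho> * mutual_info Q V) \<le> cond_div V W Q"
proof (cases "\<forall>x y. Q x > 0 \<longrightarrow> V x y \<noteq> 0 \<longrightarrow> W x y \<noteq> 0")
  case True
  show ?thesis unfolding cond_div_fin[OF True Q] using WD_real(1)[OF W V Q r True] by simp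
next
  case False
  then obtain x y where "Q x > 0" "V x y \<noteq> 0" "W x y = 0" by blast
  then show ?thesis using cond_div_inf[of Q x V y W] by simp
qed

lemma sum_ne0: assumes "(\<Sum>x\<in>UNIV. f x) \<noteq> (0::real)" shows "\<exists>x. f x \<noteq> 0"
proof (rule ccontr)
  assume "\<not> ?thesis"
  then have "\<forall>x. f x = 0" by simp
  then show False using assms by simp
qed

lemma WD1:
  fixes W :: "'x::finite \<Rightarrow> 'y::finite \<Rightarrow> real"
  assumes W: "channel W" and Q: "pdist Q"
  shows "E_SP_tilde_Q W R Q \<le> E_SP_Q W R Q"
  unfolding E_SP_tilde_Q_def E_SP_Q_def
proof (rule SUP_least, rule INF_greatest)
  fix \<rho> and V :: "'x \<Rightarrow> 'y \<Rightarrow> real" assume r: "\<rho> \<in> {0::real..}" and V: "V \<in> {V. channel V \<and> mutual_info Q V \<le> R}"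
  then have r0: "0 \<le> \<rho>" and Vc: "channel V" and mi: "mutual_info Q V \<le> R" by auto
  have "E_o W \<rho> Q - \<rho> * R \<le> E_o W \<rho> Q - \<rho> * mutual_info Q V"
    using mi r0 by (simp add: mult_left_mono)
  then have "ereal (E_o W \<rho> Q - \<rho> * R) \<le> ereal (E_o W \<rho> Q - \<rho> * mutual_info Q V)" by simp
  also have "\<dots> \<le> cond_div V W Q" by (rule WD_ereal[OF W Vc Q r0])
  finally show "ereal (E_o W \<rho> Q - \<rho> * R) \<le> cond_div V W Q" .
qed

lemma unif_pos: "0 < (unif :: 'x::finite \<Rightarrow> real) x" unfolding unif_def by simp
lemma unif_pdist: "pdist (unif :: 'x::finite \<Rightarrow> real)"
  unfolding pdist_def unif_def by (simp add: less_imp_le)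

lemma SOL:
  fixes W :: "'x::finite \<Rightarrow> 'y::finite \<Rightarrow> real"
  assumes W: "channel W" and q: "pdist q" and r: "0 \<le> \<rho>"
  shows "ereal (E_o W \<rho> unif - \<rho> * R) \<le> saddle_obj W R \<rho> q"
    and "0 < \<rho> \<Longrightarrow> saddle_obj W R \<rho> q = ereal (E_o W \<rho> unif - \<rho> * R)
       \<Longrightarrow> q y = alpha W \<rho> unif y powr (1 + \<rho>) / Zf W \<rho> unif"
proof -
  define a where "a = (\<lambda>x. \<Sum>y\<in>UNIV. W x y powr (1 / (1 + \<rho>)) * rpow (q y) (\<rho> / (1 + \<rho>)))"
  have a0: "0 \<le> a x" for x unfolding a_def by (auto intro!: sum_nonneg simp: rpow_nonneg pdist_nonneg[OF q])
  show "ereal (E_o W \<rho> unif - \<rho> * R) \<le> saddle_obj W R \<rho> q"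
  proof (cases "\<exists>x. a x = 0")
    case True then show ?thesis unfolding saddle_obj_def a_def by simp
  next
    case False
    then have ap: "\<forall>x. (unif::'x\<Rightarrow>real) x > 0 \<longrightarrow> a x > 0" using a0 by (simp add: order_less_le)
    have "E_o W \<rho> unif \<le> - ((1 + \<rho>) * (\<Sum>x\<in>UNIV. unif x * ln (a x)))"
      using JY(1)[OF W unif_pdist q r ap[unfolded a_def]] unfolding a_def mult_minus_left .
    then have "E_o W \<rho> unif - \<rho> * R \<le> - \<rho> * R - (1 + \<rho>) * (\<Sum>x\<in>UNIV. unif x * ln (a x))" by linarith
    then show ?thesis using False unfolding saddle_obj_def a_def by simp
  qed
  assume rp: "0 < \<rho>" and eq: "saddle_obj W R \<rho> q = ereal (E_o W \<rho> unif - \<rho> * R)"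
  have nz: "\<not> (\<exists>x. a x = 0)"
  proof
    assume "\<exists>x. a x = 0"
    then have "saddle_obj W R \<rho> q = \<infinity>" unfolding saddle_obj_def a_def by simp
    then show False using eq by simp
  qed
  then have ap: "\<forall>x. (unif::'x\<Rightarrow>real) x > 0 \<longrightarrow> a x > 0" using a0 by (simp add: order_less_le)
  have "- \<rho> * R - (1 + \<rho>) * (\<Sum>x\<in>UNIV. unif x * ln (a x)) = E_o W \<rho> unif - \<rho> * R"
    using eq nz unfolding saddle_obj_def a_def by simp
  then have "E_o W \<rho> unif = - ((1 + \<rho>) * (\<Sum>x\<in>UNIV. unif x * ln (a x)))" by linarith
  then have "E_o W \<rho> unif = - (1 + \<rho>) * (\<Sum>x\<in>UNIV. unif x * ln (a x))" unfolding mult_minus_left .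
  then show "q y = alpha W \<rho> unif y powr (1 + \<rho>) / Zf W \<rho> unif"
    using JY(2)[OF W unif_pdist q r ap[unfolded a_def] rp] unfolding a_def by blast
qed

lemma MIle:
  fixes V :: "'x::finite \<Rightarrow> 'y::finite \<Rightarrow> real"
  assumes V: "channel V" and Q: "pdist Q" and c: "\<forall>x. kl (V x) (pout unif V) = c"
  shows "mutual_info Q V \<le> c" and "mutual_info unif V = c"
proof -
  define pQ where "pQ = pout Q V"
  define pU where "pU = pout unif V"
  have pQd: "pdist pQ" unfolding pQ_def by (rule pout_pdist[OF Q V])
  have pUd: "pdist pU" unfolding pU_def by (rule pout_pdist[OF unif_pdist V])
  have pUpos: "V x y > 0 \<Longrightarrow> pU y > 0" for x y unfolding pU_def
    by (rule pout_pos[OF unif_pdist V unif_pos])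
  have t: "Q x * (kl (V x) pU - kl (V x) pQ) = (\<Sum>y\<in>UNIV. Q x * V x y * (ln (pQ y) - ln (pU y)))" for x
  proof -
    have "Q x * ((if V x y = 0 then 0 else V x y * ln (V x y / pU y)) - (if V x y = 0 then 0 else V x y * ln (V x y / pQ y)))
        = Q x * V x y * (ln (pQ y) - ln (pU y))" for y
    proof (cases "Q x = 0 \<or> V x y = 0")
      case True then show ?thesis by auto
    next
      case False
      then have qx: "Q x > 0" and vy: "V x y > 0" using pdist_nonneg[OF Q, of x] channel_nonneg[OF V, of x y] by auto
      have "pQ y > 0" unfolding pQ_def by (rule pout_pos[OF Q V qx vy])
      then show ?thesis using False vy pUpos[OF vy] by (simp add: ln_div algebra_simps)
    qed
    then show ?thesis unfolding kl_def sum_subtractf[symmetric] sum_distrib_left by (rule sum.cong[OF refl])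
  qed
  have "c - mutual_info Q V = (\<Sum>x\<in>UNIV. Q x * (kl (V x) pU - kl (V x) pQ))"
    unfolding mi_eq pQ_def[symmetric] using c pdist_sum[OF Q] unfolding pU_def
    by (simp add: right_diff_distrib sum_subtractf sum_distrib_right[symmetric])
  also have "\<dots> = (\<Sum>x\<in>UNIV. \<Sum>y\<in>UNIV. Q x * V x y * (ln (pQ y) - ln (pU y)))" unfolding t ..
  also have "\<dots> = (\<Sum>y\<in>UNIV. \<Sum>x\<in>UNIV. Q x * V x y * (ln (pQ y) - ln (pU y)))" by (rule sum.swap)
  also have "\<dots> = (\<Sum>y\<in>UNIV. pQ y * (ln (pQ y) - ln (pU y)))"
    unfolding pQ_def pout_def sum_distrib_right ..
  also have "\<dots> = kl pQ pU"
    unfolding kl_def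
  proof (rule sum.cong[OF refl])
    fix y show "pQ y * (ln (pQ y) - ln (pU y)) = (if pQ y = 0 then 0 else pQ y * ln (pQ y / pU y))"
    proof (cases "pQ y = 0")
      case True then show ?thesis by simp
    next
      case False
      then have "pQ y > 0" using pdist_nonneg[OF pQd, of y] by simp
      then obtain x where "Q x * V x y \<noteq> 0" using sum_ne0[of "\<lambda>x. Q x * V x y"] unfolding pQ_def pout_def by auto
      then have "V x y > 0" using channel_nonneg[OF V, of x y] by (simp add: order_less_le)
      then have "pU y > 0" by (rule pUpos)
      then show ?thesis using \<open>pQ y > 0\<close> by (simp add: ln_div)
    qed
  qed
  also have "\<dots> \<ge> - ln (sum pU UNIV)"
  proof (rule gibbs)
    show "\<forall>y. 0 \<le> pQ y" using pdist_nonneg[OF pQd] by blast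
    show "sum pQ UNIV = 1" using pdist_sum[OF pQd] .
    show "\<forall>y. 0 \<le> pU y" using pdist_nonneg[OF pUd] by blast
    show "\<forall>y. 0 < pQ y \<longrightarrow> 0 < pU y"
    proof (intro allI impI)
      fix y assume "0 < pQ y"
      then obtain x where "Q x * V x y \<noteq> 0" using sum_ne0[of "\<lambda>x. Q x * V x y"] unfolding pQ_def pout_def by auto
      then have "V x y > 0" using channel_nonneg[OF V, of x y] by (simp add: order_less_le)
      then show "pU y > 0" by (rule pUpos)
    qed
  qed
  finally show "mutual_info Q V \<le> c" using pdist_sum[OF pUd] by simp
  show "mutual_info unif V = c" unfolding mi_eq c[rule_format] using pdist_sum[OF unif_pdist[where 'x='x]]
    by (simp add: sum_distrib_right[symmetric])
qed


definition Vt :: "('x::finite \<Rightarrow> 'y::finite \<Rightarrow> real) \<Rightarrow> real \<Rightarrow> 'x \<Rightarrow> 'y \<Rightarrow> real" where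
  "Vt W \<rho> x y = W x y powr (1 / (1 + \<rho>)) * rpow (alpha W \<rho> unif y) \<rho> / Zf W \<rho> unif"

definition qt :: "('x::finite \<Rightarrow> 'y::finite \<Rightarrow> real) \<Rightarrow> real \<Rightarrow> 'y \<Rightarrow> real" where
  "qt W \<rho> y = alpha W \<rho> unif y powr (1 + \<rho>) / Zf W \<rho> unif"

definition rt :: "('x::finite \<Rightarrow> 'y::finite \<Rightarrow> real) \<Rightarrow> real \<Rightarrow> real" where
  "rt W \<rho> = mutual_info unif (Vt W \<rho>)"

lemma mul_rpow: "0 \<le> a \<Longrightarrow> 0 \<le> \<rho> \<Longrightarrow> a * rpow a \<rho> = a powr (1 + \<rho>)"
  unfolding rpow_def by (auto simp: powr_mult_base powr_one)

lemma avg_const: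
  fixes f :: "'x::finite \<Rightarrow> real"
  assumes "\<forall>x x'. f x = f x'"
  shows "f x = (\<Sum>x'\<in>UNIV. unif x' * f x')"
proof -
  define c where "c = f x"
  have fc: "\<forall>x'. f x' = c" using assms unfolding c_def by blast
  have "(\<Sum>x'\<in>UNIV. unif x' * f x') = (\<Sum>(x'::'x)\<in>UNIV. unif x' * c)" using fc by simp
  also have "\<dots> = c" using pdist_sum[OF unif_pdist[where 'x='x]] by (simp add: sum_distrib_right[symmetric])
  finally show ?thesis unfolding c_def by simp
qed

locale symch =
  fixes W :: "'x::finite \<Rightarrow> 'y::finite \<Rightarrow> real" and P :: "'y set set"
  assumes W: "channel W" and SP: "sym_part W P"
begin

lemma alpha_unif: "alpha W \<rho> unif y = (\<Sum>x\<in>UNIV. (\<lambda>w. (1 / real CARD('x)) * w powr (1 / (1 + \<rho>))) (W x y))"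
  unfolding alpha_def unif_def by simp

lemma alpha_bc: "blockconst P (alpha W \<rho> unif)"
proof -
  have e: "alpha W \<rho> unif = (\<lambda>y. \<Sum>x\<in>UNIV. (\<lambda>w. (1 / real CARD('x)) * w powr (1 / (1 + \<rho>))) (W x y))"
    by (rule ext) (rule alpha_unif)
  show ?thesis unfolding e by (rule sym_col[OF SP])
qed

lemma al0: "0 \<le> alpha W \<rho> unif y" by (rule alpha_nonneg[OF unif_pdist])

lemma ii: assumes r: "0 \<le> \<rho>"
  shows "(\<Sum>y\<in>UNIV. W x y powr (1 / (1 + \<rho>)) * rpow (alpha W \<rho> unif y) \<rho>) = Zf W \<rho> unif"
proof -
  define f where "f = (\<lambda>x. \<Sum>y\<in>UNIV. W x y powr (1 / (1 + \<rho>)) * rpow (alpha W \<rho> unif y) \<rho>)"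
  have c: "\<forall>x x'. f x = f x'"
    unfolding f_def using sym_row[OF SP alpha_bc, where F="\<lambda>w a. w powr (1 / (1 + \<rho>)) * rpow a \<rho>"] by blast
  have "f x = (\<Sum>x'\<in>UNIV. unif x' * f x')" by (rule avg_const[OF c])
  also have "\<dots> = (\<Sum>x'\<in>UNIV. \<Sum>y\<in>UNIV. unif x' * (W x' y powr (1 / (1 + \<rho>)) * rpow (alpha W \<rho> unif y) \<rho>))"
    unfolding f_def by (simp add: sum_distrib_left)
  also have "\<dots> = (\<Sum>y\<in>UNIV. \<Sum>x'\<in>UNIV. unif x' * (W x' y powr (1 / (1 + \<rho>)) * rpow (alpha W \<rho> unif y) \<rho>))"
    by (rule sum.swap)
  also have "\<dots> = (\<Sum>y\<in>UNIV. alpha W \<rho> unif y * rpow (alpha W \<rho> unif y) \<rho>)"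
    unfolding alpha_def sum_distrib_right by (simp add: mult.assoc)
  also have "\<dots> = Zf W \<rho> unif" unfolding Zf_def using mul_rpow[OF al0 r] by simp
  finally show ?thesis unfolding f_def .
qed

lemma al_pos: "W x y \<noteq> 0 \<Longrightarrow> alpha W \<rho> unif y > 0"
proof -
  assume "W x y \<noteq> 0"
  then have "unif x * W x y powr (1 / (1 + \<rho>)) > 0" using unif_pos[of x] by (simp add: zero_less_mult_iff)
  moreover have "unif x * W x y powr (1 / (1 + \<rho>)) \<le> alpha W \<rho> unif y" unfolding alpha_def
    by (rule member_le_sum) (auto simp: unif_pos less_imp_le)
  ultimately show ?thesis by linarith
qed

lemma Zpos: "Zf W \<rho> unif > 0"
proof -
  obtain y where "W undefined y \<noteq> 0" using channel_sum[OF W, of undefined] sum_ne0 by force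
  then have "alpha W \<rho> unif y > 0" by (rule al_pos)
  then have "alpha W \<rho> unif y powr (1 + \<rho>) > 0" by simp
  moreover have "alpha W \<rho> unif y powr (1 + \<rho>) \<le> Zf W \<rho> unif" unfolding Zf_def
    by (rule member_le_sum) auto
  ultimately show ?thesis by linarith
qed

lemma Znz[simp]: "Zf W \<rho> unif \<noteq> 0" using Zpos by (metis less_irrefl)

lemma Vt_nonneg: "0 \<le> Vt W \<rho> x y"
  unfolding Vt_def by (intro divide_nonneg_pos mult_nonneg_nonneg) (auto simp: rpow_nonneg al0 Zpos)

lemma Vt_channel: "0 \<le> \<rho> \<Longrightarrow> channel (Vt W \<rho>)"
proof -
  assume r: "0 \<le> \<rho>"
  have "(\<Sum>y\<in>UNIV. Vt W \<rho> x y) = 1" for x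
    unfolding Vt_def sum_divide_distrib[symmetric] ii[OF r] using Zpos by simp
  then show ?thesis unfolding channel_def pdist_def using Vt_nonneg by blast
qed

lemma Vt_zero: "Vt W \<rho> x y = 0 \<longleftrightarrow> W x y = 0"
proof
  assume "Vt W \<rho> x y = 0"
  then show "W x y = 0" unfolding Vt_def using Zpos rpow_pos[OF al_pos, of x y \<rho> \<rho>]
    by (cases "W x y = 0") auto
next
  assume "W x y = 0" then show "Vt W \<rho> x y = 0" unfolding Vt_def by simp
qed

lemma pout_Vt: assumes r: "0 \<le> \<rho>" shows "pout unif (Vt W \<rho>) = qt W \<rho>"
proof
  fix y
  have "pout unif (Vt W \<rho>) y = (\<Sum>x\<in>UNIV. unif x * W x y powr (1 / (1 + \<rho>))) * rpow (alpha W \<rho> unif y) \<rho> / Zf W \<rho> unif"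
    unfolding pout_def Vt_def sum_distrib_right sum_divide_distrib by (simp add: mult.assoc)
  also have "\<dots> = alpha W \<rho> unif y * rpow (alpha W \<rho> unif y) \<rho> / Zf W \<rho> unif"
    unfolding alpha_def ..
  also have "\<dots> = qt W \<rho> y" unfolding qt_def mul_rpow[OF al0 r] ..
  finally show "pout unif (Vt W \<rho>) y = qt W \<rho> y" .
qed

lemma qt_pdist: "0 \<le> \<rho> \<Longrightarrow> pdist (qt W \<rho>)"
  using pout_Vt pout_pdist[OF unif_pdist Vt_channel] by metis

lemma qt_pos: assumes "W x y \<noteq> 0" shows "qt W \<rho> y > 0"
proof -
  have "alpha W \<rho> unif y > 0" by (rule al_pos[OF assms])
  then show ?thesis unfolding qt_def using Zpos[of \<rho>] by simp
qed

lemma kl_Vt_q_form: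
  "kl (Vt W \<rho> x) (qt W \<rho>) = (\<Sum>y\<in>UNIV. (\<lambda>w a. let v = w powr (1 / (1 + \<rho>)) * rpow a \<rho> / Zf W \<rho> unif in
       if v = 0 then 0 else v * ln (v / (a powr (1 + \<rho>) / Zf W \<rho> unif))) (W x y) (alpha W \<rho> unif y))"
  unfolding kl_def Vt_def qt_def Let_def ..

lemma kl_Vt_q_const: "kl (Vt W \<rho> x) (qt W \<rho>) = kl (Vt W \<rho> x') (qt W \<rho>)"
  unfolding kl_Vt_q_form by (rule sym_row[OF SP alpha_bc])

lemma kl_Vt_q: assumes r: "0 \<le> \<rho>" shows "kl (Vt W \<rho> x) (qt W \<rho>) = rt W \<rho>"
proof -
  have "\<forall>x'. kl (Vt W \<rho> x') (pout unif (Vt W \<rho>)) = kl (Vt W \<rho> x) (qt W \<rho>)"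
    unfolding pout_Vt[OF r] using kl_Vt_q_const by blast
  from MIle(2)[OF Vt_channel[OF r] unif_pdist this] show ?thesis unfolding rt_def by simp
qed

lemma MI_Vt: "0 \<le> \<rho> \<Longrightarrow> pdist Q \<Longrightarrow> mutual_info Q (Vt W \<rho>) \<le> rt W \<rho>"
  using MIle(1)[OF Vt_channel _ , of \<rho> Q "rt W \<rho>"] kl_Vt_q pout_Vt by simp

lemma kl_Vt_W: assumes r: "0 \<le> \<rho>" shows "kl (Vt W \<rho> x) (W x) = E_o W \<rho> unif - \<rho> * rt W \<rho>"
proof -
  define Z where "Z = Zf W \<rho> unif"
  define s where "s = 1 / (1 + \<rho>)"
  have s1: "(1 + \<rho>) * s = 1" unfolding s_def using r by simp
  have Zp: "Z > 0" unfolding Z_def by (rule Zpos)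
  have t: "(if Vt W \<rho> x y = 0 then 0 else Vt W \<rho> x y * ln (Vt W \<rho> x y / W x y))
      = - \<rho> * (if Vt W \<rho> x y = 0 then 0 else Vt W \<rho> x y * ln (Vt W \<rho> x y / qt W \<rho> y)) - ln Z * Vt W \<rho> x y" for y
  proof (cases "W x y = 0")
    case True then show ?thesis using Vt_zero by simp
  next
    case False
    then have wp: "W x y > 0" using channel_nonneg[OF W, of x y] by simp
    have ap: "alpha W \<rho> unif y > 0" using al_pos[OF False] .
    have vp: "Vt W \<rho> x y > 0" using Vt_zero[of \<rho> x y] Vt_nonneg[of \<rho> x y] False by simp
    have qp: "qt W \<rho> y > 0" using qt_pos[OF False] .
    have lv: "ln (Vt W \<rho> x y) = s * ln (W x y) + \<rho> * ln (alpha W \<rho> unif y) - ln Z"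
      unfolding Vt_def Z_def[symmetric] s_def[symmetric] using wp ap Zp rpow_pos[OF ap, of \<rho>]
      by (simp add: ln_div ln_mult ln_rpow[OF ap])
    have lq: "ln (qt W \<rho> y) = (1 + \<rho>) * ln (alpha W \<rho> unif y) - ln Z"
      unfolding qt_def Z_def[symmetric] using ap Zp by (simp add: ln_div)
    have key: "ln (Vt W \<rho> x y) - ln (W x y) = - \<rho> * (ln (Vt W \<rho> x y) - ln (qt W \<rho> y)) - ln Z"
      unfolding lv lq using s1 by algebra
    have e1: "ln (Vt W \<rho> x y / W x y) = ln (Vt W \<rho> x y) - ln (W x y)" using vp wp by (simp add: ln_div)
    have e2: "ln (Vt W \<rho> x y / qt W \<rho> y) = ln (Vt W \<rho> x y) - ln (qt W \<rho> y)" using vp qp by (simp add: ln_div)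
    have nz: "Vt W \<rho> x y \<noteq> 0" using vp by simp
    have g: "Vt W \<rho> x y * (ln (Vt W \<rho> x y) - ln (W x y)) = - \<rho> * (Vt W \<rho> x y * (ln (Vt W \<rho> x y) - ln (qt W \<rho> y))) - ln Z * Vt W \<rho> x y"
      using key by algebra
    show ?thesis unfolding e1 e2 using nz g by simp
  qed
  have "kl (Vt W \<rho> x) (W x) = - \<rho> * kl (Vt W \<rho> x) (qt W \<rho>) - ln Z * (\<Sum>y\<in>UNIV. Vt W \<rho> x y)"
    unfolding kl_def t sum_subtractf sum_distrib_left ..
  also have "\<dots> = E_o W \<rho> unif - \<rho> * rt W \<rho>"
    unfolding kl_Vt_q[OF r] channel_sum[OF Vt_channel[OF r]] E_o_Zf Z_def by simp
  finally show ?thesis .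
qed

lemma cond_div_Vt: assumes r: "0 \<le> \<rho>" and Q: "pdist Q"
  shows "cond_div (Vt W \<rho>) W Q = ereal (E_o W \<rho> unif - \<rho> * rt W \<rho>)"
proof -
  have ac: "\<forall>x y. Q x > 0 \<longrightarrow> Vt W \<rho> x y \<noteq> 0 \<longrightarrow> W x y \<noteq> 0" using Vt_zero by blast
  have "(\<Sum>x\<in>UNIV. Q x * (E_o W \<rho> unif - \<rho> * rt W \<rho>)) = (\<Sum>x\<in>UNIV. Q x) * (E_o W \<rho> unif - \<rho> * rt W \<rho>)"
    by (rule sum_distrib_right[symmetric])
  also have "\<dots> = E_o W \<rho> unif - \<rho> * rt W \<rho>" unfolding pdist_sum[OF Q] by simp
  finally show ?thesis unfolding cond_div_fin[OF ac Q] kl_Vt_W[OF r] by simp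
qed

lemma SG: assumes r: "0 \<le> \<rho>" and r': "0 \<le> \<rho>'"
  shows "E_o W \<rho>' unif \<le> E_o W \<rho> unif + (\<rho>' - \<rho>) * rt W \<rho>"
proof -
  have ac: "\<forall>x y. unif x > (0::real) \<longrightarrow> Vt W \<rho> x y \<noteq> 0 \<longrightarrow> W x y \<noteq> 0" using Vt_zero by blast
  have "E_o W \<rho>' unif - \<rho>' * mutual_info unif (Vt W \<rho>) \<le> (\<Sum>x\<in>UNIV. unif x * kl (Vt W \<rho> x) (W x))"
    by (rule WD_real(1)[OF W Vt_channel[OF r] unif_pdist r' ac])
  also have "\<dots> = (\<Sum>x::'x\<in>UNIV. unif x) * (E_o W \<rho> unif - \<rho> * rt W \<rho>)" unfolding kl_Vt_W[OF r]
    by (rule sum_distrib_right[symmetric])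
  also have "\<dots> = E_o W \<rho> unif - \<rho> * rt W \<rho>" unfolding pdist_sum[OF unif_pdist[where 'x='x]] by simp
  finally have "E_o W \<rho>' unif - \<rho>' * rt W \<rho> \<le> E_o W \<rho> unif - \<rho> * rt W \<rho>" unfolding rt_def .
  then show ?thesis using left_diff_distrib[of \<rho>' \<rho> "rt W \<rho>"] by linarith
qed

lemma rt_mono: assumes "0 \<le> \<rho>1" "\<rho>1 \<le> \<rho>2" shows "rt W \<rho>2 \<le> rt W \<rho>1"
proof (cases "\<rho>1 = \<rho>2")
  case True then show ?thesis by simp
next
  case False
  have "0 \<le> \<rho>2" using assms by simp
  have a: "E_o W \<rho>2 unif \<le> E_o W \<rho>1 unif + (\<rho>2 - \<rho>1) * rt W \<rho>1" using SG assms by simp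
  have b: "E_o W \<rho>1 unif \<le> E_o W \<rho>2 unif + (\<rho>1 - \<rho>2) * rt W \<rho>2" using SG assms by simp
  have "0 \<le> (\<rho>2 - \<rho>1) * (rt W \<rho>1 - rt W \<rho>2)" using a b by (simp add: algebra_simps)
  then show ?thesis using assms False by (simp add: zero_le_mult_iff)
qed

lemma Vt0: "Vt W 0 = W"
proof (intro ext)
  fix x y
  have "Zf W 0 unif = 1" using ii[of 0 undefined] channel_sum[OF W, of undefined]
    by (simp add: rpow_def abs_of_nonneg[OF channel_nonneg[OF W]])
  then show "Vt W 0 x y = W x y" unfolding Vt_def rpow_def by (simp add: abs_of_nonneg[OF channel_nonneg[OF W]])
qed

lemma rt0: "rt W 0 = mutual_info unif W" unfolding rt_def Vt0 ..

lemma MI_W: assumes Q: "pdist Q" shows "mutual_info Q W \<le> mutual_info unif W"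
  using MI_Vt[OF order_refl Q] unfolding Vt0 rt0 .

lemma capacity_eq: "capacity W = rt W 0"
proof -
  have "capacity W = Sup ((\<lambda>Q. mutual_info Q W) ` {Q. pdist Q})" unfolding capacity_def ..
  also have "\<dots> = mutual_info unif W"
  proof (rule cSup_eq_maximum)
    show "mutual_info unif W \<in> (\<lambda>Q. mutual_info Q W) ` {Q. pdist Q}" using unif_pdist by blast
    fix m assume "m \<in> (\<lambda>Q. mutual_info Q W) ` {Q. pdist Q}"
    then obtain Q where "pdist Q" "m = mutual_info Q W" by blast
    then show "m \<le> mutual_info unif W" using MI_W by simp
  qed
  finally show ?thesis unfolding rt0 .
qed

end


context symch begin

lemma cont_s: "continuous_on {0::real..} (\<lambda>\<rho>. 1 / (1 + \<rho>))"
  by (intro continuous_intros) auto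

lemma cont_Wpow: "continuous_on {0::real..} (\<lambda>\<rho>. W x y powr (1 / (1 + \<rho>)))"
  by (rule continuous_on_powr'[OF continuous_on_const cont_s]) (auto simp: channel_nonneg[OF W])

lemma cont_alpha: "continuous_on {0::real..} (\<lambda>\<rho>. alpha W \<rho> unif y)"
  unfolding alpha_def by (intro continuous_intros cont_Wpow)

lemma cont_alpha_pow: "continuous_on {0::real..} (\<lambda>\<rho>. alpha W \<rho> unif y powr (1 + \<rho>))"
  by (rule continuous_on_powr'[OF cont_alpha]) (auto intro!: continuous_intros simp: al0)

lemma cont_Z: "continuous_on {0::real..} (\<lambda>\<rho>. Zf W \<rho> unif)"
  unfolding Zf_def by (intro continuous_intros cont_alpha_pow)

lemma cont_Eo: "continuous_on {0::real..} (\<lambda>\<rho>. E_o W \<rho> unif)"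
  unfolding E_o_Zf by (intro continuous_intros cont_Z) (auto)

lemma rt_form: assumes r: "0 \<le> \<rho>"
  shows "rt W \<rho> = (\<Sum>x\<in>UNIV. unif x * (\<Sum>y\<in>UNIV. if W x y = 0 then 0 else
     (W x y powr (1 / (1 + \<rho>)) * alpha W \<rho> unif y powr \<rho> / Zf W \<rho> unif) *
     ln ((W x y powr (1 / (1 + \<rho>)) * alpha W \<rho> unif y powr \<rho> / Zf W \<rho> unif) / qt W \<rho> y)))"
  unfolding rt_def mi_eq pout_Vt[OF r]
proof (rule sum.cong[OF refl])
  fix x
  show "unif x * kl (Vt W \<rho> x) (qt W \<rho>) = unif x * (\<Sum>y\<in>UNIV. if W x y = 0 then 0 else
     (W x y powr (1 / (1 + \<rho>)) * alpha W \<rho> unif y powr \<rho> / Zf W \<rho> unif) *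
     ln ((W x y powr (1 / (1 + \<rho>)) * alpha W \<rho> unif y powr \<rho> / Zf W \<rho> unif) / qt W \<rho> y))"
    unfolding kl_def
  proof (intro arg_cong[where f="\<lambda>z. unif x * z"] sum.cong[OF refl])
    fix y
    show "(if Vt W \<rho> x y = 0 then 0 else Vt W \<rho> x y * ln (Vt W \<rho> x y / qt W \<rho> y)) =
      (if W x y = 0 then 0 else
     (W x y powr (1 / (1 + \<rho>)) * alpha W \<rho> unif y powr \<rho> / Zf W \<rho> unif) *
     ln ((W x y powr (1 / (1 + \<rho>)) * alpha W \<rho> unif y powr \<rho> / Zf W \<rho> unif) / qt W \<rho> y))"
    proof (cases "W x y = 0")
      case True then show ?thesis using Vt_zero by simp
    next
      case False
      have "rpow (alpha W \<rho> unif y) \<rho> = alpha W \<rho> unif y powr \<rho>" by (rule rpow_pos_eq[OF al_pos[OF False]])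
      then show ?thesis using False Vt_zero[of \<rho> x y] unfolding Vt_def by simp
    qed
  qed
qed

lemma cont_term:
  assumes "W x y \<noteq> 0"
  shows "continuous_on {0::real..} (\<lambda>\<rho>. (W x y powr (1 / (1 + \<rho>)) * alpha W \<rho> unif y powr \<rho> / Zf W \<rho> unif) *
     ln ((W x y powr (1 / (1 + \<rho>)) * alpha W \<rho> unif y powr \<rho> / Zf W \<rho> unif) / qt W \<rho> y))"
proof -
  have ap: "\<And>\<rho>. alpha W \<rho> unif y > 0" using al_pos[OF assms] .
  have apnz: "\<And>\<rho>. alpha W \<rho> unif y \<noteq> 0" using ap by (metis less_irrefl)
  have c1: "continuous_on {0::real..} (\<lambda>\<rho>. alpha W \<rho> unif y powr \<rho>)"
    by (rule continuous_on_powr'[OF cont_alpha]) (auto intro!: continuous_intros simp: apnz al0)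
  have c2: "continuous_on {0::real..} (\<lambda>\<rho>. W x y powr (1 / (1 + \<rho>)) * alpha W \<rho> unif y powr \<rho> / Zf W \<rho> unif)"
    by (intro continuous_intros c1 cont_Wpow cont_Z) auto
  have cq: "continuous_on {0::real..} (\<lambda>\<rho>. qt W \<rho> y)"
    unfolding qt_def by (intro continuous_intros cont_alpha_pow cont_Z) auto
  have pos: "W x y powr (1 / (1 + \<rho>)) * alpha W \<rho> unif y powr \<rho> / Zf W \<rho> unif / qt W \<rho> y \<noteq> 0" for \<rho>
    using assms ap[of \<rho>] qt_pos[OF assms, of \<rho>] by simp
  show ?thesis
    by (intro continuous_intros c2 cq) (use pos qt_pos[OF assms] in auto)
qed

lemma cont_rt: "continuous_on {0::real..} (rt W)"
proof -
  have "continuous_on {0::real..} (\<lambda>\<rho>. \<Sum>x\<in>UNIV. unif x * (\<Sum>y\<in>UNIV. if W x y = 0 then 0 else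
     (W x y powr (1 / (1 + \<rho>)) * alpha W \<rho> unif y powr \<rho> / Zf W \<rho> unif) *
     ln ((W x y powr (1 / (1 + \<rho>)) * alpha W \<rho> unif y powr \<rho> / Zf W \<rho> unif) / qt W \<rho> y)))"
  proof (intro continuous_on_sum continuous_on_mult continuous_on_const)
    fix x y
    show "continuous_on {0::real..} (\<lambda>\<rho>. if W x y = 0 then 0 else
     (W x y powr (1 / (1 + \<rho>)) * alpha W \<rho> unif y powr \<rho> / Zf W \<rho> unif) *
     ln ((W x y powr (1 / (1 + \<rho>)) * alpha W \<rho> unif y powr \<rho> / Zf W \<rho> unif) / qt W \<rho> y))"
    proof (cases "W x y = 0")
      case True then show ?thesis by simp
    next
      case False then show ?thesis using cont_term[OF False] by simp
    qed
  qed
  then show ?thesis by (rule continuous_on_cong[THEN iffD1, rotated 2]) (auto simp: rt_form)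
qed

end


lemma cont_pt:
  fixes f :: "real \<Rightarrow> real"
  assumes "continuous_on {0..} f" "0 \<le> x" "0 < e"
  shows "\<exists>d>0. \<forall>x'. 0 \<le> x' \<longrightarrow> \<bar>x' - x\<bar> < d \<longrightarrow> \<bar>f x' - f x\<bar> < e"
proof -
  have "\<forall>x\<in>{0..}. \<forall>e>0. \<exists>d>0. \<forall>x'\<in>{0..}. dist x' x < d \<longrightarrow> dist (f x') (f x) < e"
    using assms(1) unfolding continuous_on_iff .
  then obtain d where "d > 0" "\<forall>x'\<in>{0..}. dist x' x < d \<longrightarrow> dist (f x') (f x) < e"
    using assms(2,3) by fastforce
  then show ?thesis unfolding dist_real_def by auto
qed

lemma kl_self: "kl v v = 0" unfolding kl_def by (auto intro!: sum.neutral)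

context symch begin

lemma Z0: "Zf W 0 unif = 1"
  using ii[of 0 undefined] channel_sum[OF W, of undefined]
  by (simp add: rpow_def abs_of_nonneg[OF channel_nonneg[OF W]])

lemma Eo0: "E_o W 0 unif = 0" unfolding E_o_Zf Z0 by simp

lemma cond_div_self: "pdist Q \<Longrightarrow> cond_div W W Q = 0"
  using cond_div_fin[of Q W W] by (simp add: kl_self zero_ereal_def)

lemma E_SP_le0: assumes "capacity W \<le> R" shows "E_SP W R \<le> 0"
  unfolding E_SP_def
proof (rule SUP_least)
  fix Q :: "'x \<Rightarrow> real" assume "Q \<in> {Q. pdist Q}"
  then have Q: "pdist Q" by simp
  have "mutual_info Q W \<le> R" using MI_W[OF Q] capacity_eq rt0 assms by simp
  then have "W \<in> {V. channel V \<and> mutual_info Q V \<le> R}" using W by simp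
  then have "E_SP_Q W R Q \<le> cond_div W W Q" unfolding E_SP_Q_def by (rule INF_lower)
  then show "E_SP_Q W R Q \<le> 0" using cond_div_self[OF Q] by simp
qed

lemma bdd_inf: "bdd_above {R. E_SP W R = \<infinity>}"
proof (rule bdd_aboveI)
  fix R assume "R \<in> {R. E_SP W R = \<infinity>}"
  then have "E_SP W R = \<infinity>" by simp
  then show "R \<le> capacity W" using E_SP_le0[of R] by (cases "capacity W \<le> R") auto
qed

lemma fin_above: "R_inf W < r \<Longrightarrow> E_SP W r \<noteq> \<infinity>"
proof
  assume a: "R_inf W < r" and b: "E_SP W r = \<infinity>"
  have "r \<le> R_inf W" unfolding R_inf_def by (rule cSup_upper) (use b bdd_inf in auto)
  then show False using a by simp
qed

lemma ESPQ_le: "E_SP_Q W r unif \<le> E_SP W r"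
  unfolding E_SP_def by (rule SUP_upper) (simp add: unif_pdist)

lemma g_le_ESPQ: "0 \<le> \<rho> \<Longrightarrow> ereal (E_o W \<rho> unif - \<rho> * r) \<le> E_SP_Q W r unif"
proof -
  assume r: "0 \<le> \<rho>"
  have "ereal (E_o W \<rho> unif - \<rho> * r) \<le> E_SP_tilde_Q W r unif"
    unfolding E_SP_tilde_Q_def by (rule SUP_upper) (use r in simp)
  also have "\<dots> \<le> E_SP_Q W r unif" by (rule WD1[OF W unif_pdist])
  finally show ?thesis .
qed

lemma g_bounded: assumes "R_inf W < r"
  shows "\<exists>M. \<forall>\<rho>\<ge>0. E_o W \<rho> unif - \<rho> * r \<le> M"
proof -
  have fin: "E_SP W r \<noteq> \<infinity>" by (rule fin_above[OF assms])
  have le: "ereal (E_o W \<rho> unif - \<rho> * r) \<le> E_SP W r" if "0 \<le> \<rho>" for \<rho>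
    using g_le_ESPQ[OF that, of r] ESPQ_le[of r] by (rule order_trans)
  note le
  moreover have "E_SP W r \<noteq> - \<infinity>" using le[of 0] by auto
  ultimately have "E_o W \<rho> unif - \<rho> * r \<le> real_of_ereal (E_SP W r)" if "0 \<le> \<rho>" for \<rho>
    using fin that by (cases "E_SP W r") auto
  then show ?thesis by blast
qed

lemma exists_max: assumes "R_inf W < r"
  shows "\<exists>\<rho>s\<ge>0. \<forall>\<rho>\<ge>0. E_o W \<rho> unif - \<rho> * r \<le> E_o W \<rho>s unif - \<rho>s * r"
proof -
  define r' where "r' = (R_inf W + r) / 2"
  have r'1: "R_inf W < r'" and r'2: "r' < r" unfolding r'_def using assms by auto
  obtain M where M: "\<forall>\<rho>\<ge>0. E_o W \<rho> unif - \<rho> * r' \<le> M" using g_bounded[OF r'1] by blast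
  define K where "K = max 0 (M / (r - r'))"
  have K0: "0 \<le> K" unfolding K_def by simp
  have "M / (r - r') \<le> K" unfolding K_def by simp
  then have KM: "M \<le> K * (r - r')" using r'2 by (simp add: pos_divide_le_eq)
  have cg: "continuous_on {0..K} (\<lambda>\<rho>. E_o W \<rho> unif - \<rho> * r)"
    by (intro continuous_intros continuous_on_subset[OF cont_Eo]) auto
  obtain \<rho>s where rs: "\<rho>s \<in> {0..K}" "\<forall>\<rho>\<in>{0..K}. E_o W \<rho> unif - \<rho> * r \<le> E_o W \<rho>s unif - \<rho>s * r"
    using continuous_attains_sup[OF compact_Icc _ cg] K0 by auto
  have g0: "0 \<le> E_o W \<rho>s unif - \<rho>s * r" using rs(2)[rule_format, of 0] K0 Eo0 by simp
  have "E_o W \<rho> unif - \<rho> * r \<le> E_o W \<rho>s unif - \<rho>s * r" if "0 \<le> \<rho>" for \<rho>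
  proof (cases "\<rho> \<le> K")
    case True then show ?thesis using rs(2) that by simp
  next
    case False
    have "E_o W \<rho> unif - \<rho> * r = (E_o W \<rho> unif - \<rho> * r') - \<rho> * (r - r')" by (simp add: algebra_simps)
    also have "\<dots> \<le> M - \<rho> * (r - r')" using M that by simp
    also have "\<dots> < M - K * (r - r')" using False r'2 by simp
    also have "\<dots> \<le> 0" using KM by simp
    finally show ?thesis using g0 by simp
  qed
  then show ?thesis using rs(1) by auto
qed

definition ismax :: "real \<Rightarrow> real \<Rightarrow> bool" where
  "ismax r \<rho>s \<longleftrightarrow> 0 \<le> \<rho>s \<and> (\<forall>\<rho>\<ge>0. E_o W \<rho> unif - \<rho> * r \<le> E_o W \<rho>s unif - \<rho>s * r)"

lemma ismax_right: "ismax r \<rho>s \<Longrightarrow> \<rho>s < \<rho>' \<Longrightarrow> rt W \<rho>' \<le> r"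
proof -
  assume m: "ismax r \<rho>s" and l: "\<rho>s < \<rho>'"
  have r0: "0 \<le> \<rho>s" "0 \<le> \<rho>'" using m l unfolding ismax_def by auto
  have a: "E_o W \<rho>s unif \<le> E_o W \<rho>' unif + (\<rho>s - \<rho>') * rt W \<rho>'" by (rule SG[OF r0(2) r0(1)])
  have b: "E_o W \<rho>' unif - \<rho>' * r \<le> E_o W \<rho>s unif - \<rho>s * r" using m r0 unfolding ismax_def by blast
  have "0 \<le> (\<rho>' - \<rho>s) * (r - rt W \<rho>')" using a b by (simp add: algebra_simps)
  then show ?thesis using l by (simp add: zero_le_mult_iff)
qed

lemma ismax_left: "ismax r \<rho>s \<Longrightarrow> 0 \<le> \<rho>' \<Longrightarrow> \<rho>' < \<rho>s \<Longrightarrow> r \<le> rt W \<rho>'"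
proof -
  assume m: "ismax r \<rho>s" and r1: "0 \<le> \<rho>'" and l: "\<rho>' < \<rho>s"
  have r0: "0 \<le> \<rho>s" using m unfolding ismax_def by auto
  have a: "E_o W \<rho>s unif \<le> E_o W \<rho>' unif + (\<rho>s - \<rho>') * rt W \<rho>'" by (rule SG[OF r1 r0])
  have b: "E_o W \<rho>' unif - \<rho>' * r \<le> E_o W \<rho>s unif - \<rho>s * r" using m r1 unfolding ismax_def by blast
  have "0 \<le> (\<rho>s - \<rho>') * (rt W \<rho>' - r)" using a b by (simp add: algebra_simps)
  then show ?thesis using l by (simp add: zero_le_mult_iff)
qed

lemma ismax_rt: assumes m: "ismax r \<rho>s" and rc: "r < capacity W"
  shows "0 < \<rho>s" "rt W \<rho>s = r"
proof -
  have r0: "0 \<le> \<rho>s" using m unfolding ismax_def by auto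
  have up: "rt W \<rho>s \<le> r"
  proof (rule ccontr)
    assume "\<not> rt W \<rho>s \<le> r"
    then have e: "0 < rt W \<rho>s - r" by simp
    obtain d where d: "d > 0" "\<forall>x'. 0 \<le> x' \<longrightarrow> \<bar>x' - \<rho>s\<bar> < d \<longrightarrow> \<bar>rt W x' - rt W \<rho>s\<bar> < rt W \<rho>s - r"
      using cont_pt[OF cont_rt r0 e] by blast
    have "rt W (\<rho>s + d/2) \<le> r" using ismax_right[OF m] d(1) by simp
    moreover have "\<bar>rt W (\<rho>s + d/2) - rt W \<rho>s\<bar> < rt W \<rho>s - r" using d r0 by simp
    ultimately show False by linarith
  qed
  show pos: "0 < \<rho>s"
  proof (rule ccontr)
    assume "\<not> 0 < \<rho>s"
    then have "\<rho>s = 0" using r0 by simp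
    then have "rt W 0 \<le> r" using up by simp
    then show False using rc capacity_eq by simp
  qed
  have lo: "r \<le> rt W \<rho>s"
  proof (rule ccontr)
    assume "\<not> r \<le> rt W \<rho>s"
    then have e: "0 < r - rt W \<rho>s" by simp
    obtain d where d: "d > 0" "\<forall>x'. 0 \<le> x' \<longrightarrow> \<bar>x' - \<rho>s\<bar> < d \<longrightarrow> \<bar>rt W x' - rt W \<rho>s\<bar> < r - rt W \<rho>s"
      using cont_pt[OF cont_rt r0 e] by blast
    define x' where "x' = \<rho>s - min d \<rho>s / 2"
    have x'1: "0 \<le> x'" "x' < \<rho>s" "\<bar>x' - \<rho>s\<bar> < d" unfolding x'_def using d(1) pos by (auto simp: min_def)
    have "r \<le> rt W x'" using ismax_left[OF m x'1(1,2)] .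
    moreover have "\<bar>rt W x' - rt W \<rho>s\<bar> < r - rt W \<rho>s" using d(2) x'1 by blast
    ultimately show False by linarith
  qed
  show "rt W \<rho>s = r" using up lo by simp
qed

lemma ESPQ_eq: assumes m: "ismax r \<rho>s" and rc: "r < capacity W"
  shows "E_SP_Q W r unif = ereal (E_o W \<rho>s unif - \<rho>s * r)"
proof (rule antisym)
  have r0: "0 \<le> \<rho>s" using m unfolding ismax_def by auto
  have "Vt W \<rho>s \<in> {V. channel V \<and> mutual_info unif V \<le> r}"
    using Vt_channel[OF r0] ismax_rt(2)[OF m rc] unfolding rt_def by simp
  then have "E_SP_Q W r unif \<le> cond_div (Vt W \<rho>s) W unif" unfolding E_SP_Q_def by (rule INF_lower)
  also have "\<dots> = ereal (E_o W \<rho>s unif - \<rho>s * r)" using cond_div_Vt[OF r0 unif_pdist] ismax_rt(2)[OF m rc] by simp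
  finally show "E_SP_Q W r unif \<le> ereal (E_o W \<rho>s unif - \<rho>s * r)" .
  show "ereal (E_o W \<rho>s unif - \<rho>s * r) \<le> E_SP_Q W r unif" by (rule g_le_ESPQ[OF r0])
qed

end


context symch begin

lemma ln_Vt: assumes "W x y \<noteq> 0"
  shows "ln (Vt W \<rho> x y) = 1 / (1 + \<rho>) * ln (W x y) + \<rho> * ln (alpha W \<rho> unif y) - ln (Zf W \<rho> unif)"
proof -
  have wp: "W x y > 0" using assms channel_nonneg[OF W, of x y] by simp
  have ap: "alpha W \<rho> unif y > 0" by (rule al_pos[OF assms])
  show ?thesis unfolding Vt_def using wp ap Zpos[of \<rho>] rpow_pos[OF ap, of \<rho>]
    by (simp add: ln_div ln_mult ln_rpow[OF ap])
qed

lemma ln_qt: assumes "W x y \<noteq> 0"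
  shows "ln (qt W \<rho> y) = (1 + \<rho>) * ln (alpha W \<rho> unif y) - ln (Zf W \<rho> unif)"
proof -
  have ap: "alpha W \<rho> unif y > 0" by (rule al_pos[OF assms])
  show ?thesis unfolding qt_def using ap Zpos[of \<rho>] by (simp add: ln_div)
qed

lemma rq: assumes r: "0 \<le> \<rho>"
  shows "rpow (qt W \<rho> y) (\<rho> / (1 + \<rho>)) = rpow (alpha W \<rho> unif y) \<rho> / Zf W \<rho> unif powr (\<rho> / (1 + \<rho>))"
proof (cases "\<rho> = 0")
  case True then show ?thesis unfolding rpow_def by simp
next
  case False
  then have t0: "\<rho> / (1 + \<rho>) \<noteq> 0" using r by simp
  have "(alpha W \<rho> unif y powr (1 + \<rho>)) powr (\<rho> / (1 + \<rho>)) = alpha W \<rho> unif y powr \<rho>"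
    unfolding powr_powr st_facts(2)[OF r] ..
  then show ?thesis unfolding rpow_def qt_def using False t0 by (simp add: powr_divide)
qed

lemma uq: assumes r: "0 \<le> \<rho>"
  shows "uvec W \<rho> (qt W \<rho>) x y = Vt W \<rho> x y * Zf W \<rho> unif powr (1 / (1 + \<rho>))"
proof -
  define Z where "Z = Zf W \<rho> unif"
  have Zp: "Z > 0" unfolding Z_def by (rule Zpos)
  have "Z powr (1 / (1 + \<rho>)) = Z powr (1 - \<rho> / (1 + \<rho>))" using st_facts(3)[OF r] by simp
  also have "\<dots> = Z / Z powr (\<rho> / (1 + \<rho>))" unfolding powr_diff using Zp by simp
  finally have e: "Z powr (1 / (1 + \<rho>)) = Z / Z powr (\<rho> / (1 + \<rho>))" .
  show ?thesis unfolding uvec_def rq[OF r] Vt_def Z_def[symmetric] e using Zp by simp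
qed

lemma suq: assumes r: "0 \<le> \<rho>"
  shows "sum (uvec W \<rho> (qt W \<rho>) x) UNIV = Zf W \<rho> unif powr (1 / (1 + \<rho>))"
  unfolding uq[OF r] sum_distrib_right[symmetric] channel_sum[OF Vt_channel[OF r]] by simp

lemma Vt_div: assumes r: "0 \<le> \<rho>"
  shows "uvec W \<rho> (qt W \<rho>) x y / sum (uvec W \<rho> (qt W \<rho>) x) UNIV = Vt W \<rho> x y"
  unfolding suq[OF r] uq[OF r] using Zpos[of \<rho>] by simp

lemma al_struct:
  assumes K: "\<forall>z. W z y \<noteq> 0 \<longrightarrow> W z y = K * q"
  shows "alpha W \<rho> unif y = real (card {z. W z y \<noteq> 0}) / real CARD('x) * (K * q) powr (1 / (1 + \<rho>))"
proof -
  have "alpha W \<rho> unif y = (\<Sum>z\<in>UNIV. if W z y \<noteq> 0 then 1 / real CARD('x) * (K * q) powr (1 / (1 + \<rho>)) else 0)"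
    unfolding alpha_def unif_def
  proof (rule sum.cong[OF refl])
    fix z show "1 / real CARD('x) * W z y powr (1 / (1 + \<rho>)) =
      (if W z y \<noteq> 0 then 1 / real CARD('x) * (K * q) powr (1 / (1 + \<rho>)) else 0)"
      using K by auto
  qed
  also have "\<dots> = (\<Sum>z\<in>{z. W z y \<noteq> 0}. 1 / real CARD('x) * (K * q) powr (1 / (1 + \<rho>)))"
    using sum.inter_filter[of UNIV "\<lambda>z. 1 / real CARD('x) * (K * q) powr (1 / (1 + \<rho>))" "\<lambda>z. W z y \<noteq> 0"]
    by simp
  also have "\<dots> = real (card {z. W z y \<noteq> 0}) / real CARD('x) * (K * q) powr (1 / (1 + \<rho>))" by simp
  finally show ?thesis .
qed

lemma linear_case:
  assumes a0: "0 \<le> a" and ab: "a < b" and qe: "qt W a = qt W b" and ve: "Vt W a = Vt W b"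
  shows "\<exists>L. \<forall>\<rho>\<ge>0. E_o W \<rho> unif = \<rho> * L"
proof -
  define q where "q = qt W a"
  define sa where "sa = 1 / (1 + a)"
  define sb where "sb = 1 / (1 + b)"
  have b0: "0 \<le> b" using a0 ab by simp
  have sa1: "sa * (1 + a) = 1" unfolding sa_def using a0 by simp
  have sb1: "sb * (1 + b) = 1" unfolding sb_def using b0 by simp
  have p1: "1 + a > 0" "1 + b > 0" using a0 ab by auto
  have "sa - sb = (b - a) / ((1 + a) * (1 + b))" unfolding sa_def sb_def using p1 by (simp add: field_simps)
  then have sab: "sa - sb \<noteq> 0" using ab p1 by simp
  define c where "c = (sa * ln (Zf W a unif) - sb * ln (Zf W b unif)) / (sa - sb)"
  define K where "K = exp c"
  have Kp: "K > 0" unfolding K_def by simp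
  have WK: "W x y = K * q y" if nz: "W x y \<noteq> 0" for x y
  proof -
    have wp: "W x y > 0" using nz channel_nonneg[OF W, of x y] by simp
    have qp: "q y > 0" unfolding q_def by (rule qt_pos[OF nz])
    have E1: "ln (Vt W a x y) = sa * ln (W x y) + a * ln (alpha W a unif y) - ln (Zf W a unif)"
      using ln_Vt[OF nz, of a] unfolding sa_def by simp
    have E3: "ln (Vt W a x y) = sb * ln (W x y) + b * ln (alpha W b unif y) - ln (Zf W b unif)"
      using ln_Vt[OF nz, of b] ve unfolding sb_def by simp
    have E2: "ln (q y) = (1 + a) * ln (alpha W a unif y) - ln (Zf W a unif)"
      using ln_qt[OF nz, of a] unfolding q_def by simp
    have E4: "ln (q y) = (1 + b) * ln (alpha W b unif y) - ln (Zf W b unif)"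
      using ln_qt[OF nz, of b] qe unfolding q_def by simp
    have "(sa - sb) * (ln (W x y) - ln (q y)) = sa * ln (Zf W a unif) - sb * ln (Zf W b unif)"
      using E1 E2 E3 E4 sa1 sb1 by algebra
    then have "ln (W x y) - ln (q y) = c" unfolding c_def using sab by (simp add: field_simps)
    then have "ln (W x y) = ln (K * q y)" unfolding K_def using qp by (simp add: ln_mult)
    then show ?thesis using wp qp Kp by simp
  qed
  define kk where "kk = (\<lambda>y. real (card {z. W z y \<noteq> 0}))"
  define n where "n = real CARD('x)"
  have np: "n > 0" unfolding n_def by simp
  have al: "alpha W \<rho> unif y = kk y / n * (K * q y) powr (1 / (1 + \<rho>))" for \<rho> y
    unfolding kk_def n_def by (rule al_struct) (use WK in blast)
  have colz: "q y = 0" if "\<forall>z. W z y = 0" for y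
  proof -
    have "alpha W a unif y = 0" unfolding alpha_def using that by simp
    then show ?thesis unfolding q_def qt_def by simp
  qed
  have kkpos: "kk y > 0" if "W z y \<noteq> 0" for z y
  proof -
    have "z \<in> {z. W z y \<noteq> 0}" using that by simp
    then have "card {z. W z y \<noteq> 0} > 0" by (simp add: card_gt_0_iff) blast
    then show ?thesis unfolding kk_def by simp
  qed
  have qpow: "(kk y / n) powr (1 + a) = Zf W a unif / K" if "W z y \<noteq> 0" for z y
  proof -
    have qp: "q y > 0" unfolding q_def by (rule qt_pos[OF that])
    have "q y = alpha W a unif y powr (1 + a) / Zf W a unif" unfolding q_def qt_def ..
    also have "alpha W a unif y powr (1 + a) = (kk y / n) powr (1 + a) * (K * q y)"
      unfolding al powr_mult powr_powr using a0 Kp qp by simp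
    finally have eq: "q y = (kk y / n) powr (1 + a) * (K * q y) / Zf W a unif" .
    have "q y * Zf W a unif = (kk y / n) powr (1 + a) * (K * q y) / Zf W a unif * Zf W a unif"
      using eq by simp
    also have "\<dots> = q y * ((kk y / n) powr (1 + a) * K)" using Zpos[of a] by simp
    finally have "q y * Zf W a unif = q y * ((kk y / n) powr (1 + a) * K)" .
    then have "Zf W a unif = (kk y / n) powr (1 + a) * K" using qp mult_left_cancel[of "q y"] by simp
    then show ?thesis using Kp by simp
  qed
  obtain z0 y0 where z0: "W z0 y0 \<noteq> 0" using channel_sum[OF W, of undefined] sum_ne0 by force
  define k where "k = kk y0"
  have kk_const: "kk y = k" if "W z y \<noteq> 0" for z y
  proof -
    have e: "(kk y / n) powr (1 + a) = (k / n) powr (1 + a)" unfolding k_def using qpow[OF that] qpow[OF z0] by simp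
    have "ln ((kk y / n) powr (1 + a)) = ln ((k / n) powr (1 + a))" using e by simp
    then have "(1 + a) * ln (kk y / n) = (1 + a) * ln (k / n)" by simp
    then have "ln (kk y / n) = ln (k / n)" using a0 by simp
    moreover have "kk y / n > 0" "k / n > 0" unfolding k_def using kkpos[OF that] kkpos[OF z0] np by auto
    ultimately have "kk y / n = k / n" by simp
    then show ?thesis using np by simp
  qed
  have kp: "k > 0" unfolding k_def using kkpos[OF z0] .
  have qsum: "(\<Sum>y\<in>UNIV. q y) = 1" unfolding q_def using pdist_sum[OF qt_pdist[OF a0]] .
  have Zform: "Zf W \<rho> unif = (k / n) powr (1 + \<rho>) * K" if r: "0 \<le> \<rho>" for \<rho>
  proof -
    have "alpha W \<rho> unif y powr (1 + \<rho>) = (k / n) powr (1 + \<rho>) * K * q y" for y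
    proof (cases "\<exists>z. W z y \<noteq> 0")
      case True
      then obtain z where z: "W z y \<noteq> 0" by blast
      have qp: "q y > 0" unfolding q_def by (rule qt_pos[OF z])
      show ?thesis unfolding al kk_const[OF z] powr_mult powr_powr using r Kp qp by simp
    next
      case False
      then have "q y = 0" using colz by blast
      moreover have "alpha W \<rho> unif y = 0" unfolding alpha_def using False by simp
      ultimately show ?thesis using r by simp
    qed
    then have "Zf W \<rho> unif = (\<Sum>y\<in>UNIV. (k / n) powr (1 + \<rho>) * K * q y)" unfolding Zf_def by simp
    also have "\<dots> = (k / n) powr (1 + \<rho>) * K" unfolding sum_distrib_left[symmetric] qsum by simp
    finally show ?thesis .
  qed
  have Z0': "(k / n) * K = 1" using Zform[of 0] Z0 kp np Kp by simp
  have "E_o W \<rho> unif = \<rho> * (- ln (k / n))" if r: "0 \<le> \<rho>" for \<rho>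
  proof -
    have "Zf W \<rho> unif = (k / n) powr \<rho>"
      unfolding Zform[OF r] powr_add using Z0' kp np Kp by (simp add: mult.assoc)
    then show ?thesis unfolding E_o_Zf using kp np by simp
  qed
  then show ?thesis by blast
qed

end


context symch begin

lemma ismax_lt_False:
  assumes Rinf: "R_inf W < R" and m1: "ismax R a" and m2: "ismax R b" and ab: "a < b"
  shows False
proof -
  define m where "m = (a + b) / 2"
  have a0: "0 \<le> a" using m1 unfolding ismax_def by simp
  have b0: "0 \<le> b" "0 < b" using a0 ab by auto
  have m0: "0 \<le> m" "a < m" "m < b" unfolding m_def using a0 ab by auto
  have gab: "E_o W a unif - a * R = E_o W b unif - b * R"
    using m1 m2 a0 b0 unfolding ismax_def by (meson order_antisym)
  have s1: "E_o W a unif \<le> E_o W m unif + (a - m) * rt W m" by (rule SG[OF m0(1) a0])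
  have s2: "E_o W b unif \<le> E_o W m unif + (b - m) * rt W m" by (rule SG[OF m0(1) b0(1)])
  have z: "(a - m) * rt W m + (b - m) * rt W m = 0" unfolding m_def by (simp add: algebra_simps)
  have mR: "m * R = (a * R + b * R) / 2" unfolding m_def by (simp add: algebra_simps)
  have s12: "E_o W a unif + E_o W b unif \<le> 2 * E_o W m unif" using s1 s2 z by linarith
  have gm: "E_o W a unif - a * R \<le> E_o W m unif - m * R" using s12 mR gab by argo
  have mm: "ismax R m" unfolding ismax_def
  proof (intro conjI allI impI)
    show "0 \<le> m" by (rule m0(1))
    fix \<rho> :: real assume "0 \<le> \<rho>"
    then have "E_o W \<rho> unif - \<rho> * R \<le> E_o W a unif - a * R" using m1 unfolding ismax_def by blast
    then show "E_o W \<rho> unif - \<rho> * R \<le> E_o W m unif - m * R" using gm by linarith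
  qed
  have rtm: "rt W m = R" using ismax_right[OF m1 m0(2)] ismax_left[OF m2 m0(1) m0(3)] by simp
  have gbm: "E_o W b unif - b * R = E_o W m unif - m * R"
    using m2 mm b0 m0 unfolding ismax_def by (meson order_antisym)
  have ac: "\<forall>x y. unif x > (0::real) \<longrightarrow> Vt W m x y \<noteq> 0 \<longrightarrow> W x y \<noteq> 0" using Vt_zero by blast
  have sumk: "(\<Sum>x\<in>UNIV. unif x * kl (Vt W m x) (W x)) = E_o W m unif - m * R"
  proof -
    have "(\<Sum>x\<in>UNIV. unif x * kl (Vt W m x) (W x)) = (\<Sum>x::'x\<in>UNIV. unif x) * (E_o W m unif - m * rt W m)"
      unfolding kl_Vt_W[OF m0(1)] by (rule sum_distrib_right[symmetric])
    then show ?thesis unfolding pdist_sum[OF unif_pdist] rtm by simp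
  qed
  have eq: "E_o W b unif - b * mutual_info unif (Vt W m) = (\<Sum>x\<in>UNIV. unif x * kl (Vt W m x) (W x))"
    unfolding sumk using gbm rtm unfolding rt_def by simp
  note WR = WD_real[OF W Vt_channel[OF m0(1)] unif_pdist b0(1) ac]
  have qe: "qt W m = qt W b"
  proof
    fix y show "qt W m y = qt W b y"
      using WR(2)[OF b0(2) eq, of y] unfolding pout_Vt[OF m0(1)] qt_def by simp
  qed
  have ve: "Vt W m = Vt W b"
  proof (intro ext)
    fix x y
    show "Vt W m x y = Vt W b x y"
      using WR(3)[OF b0(2) eq unif_pos, of x y] unfolding pout_Vt[OF m0(1)] qe Vt_div[OF b0(1)] .
  qed
  obtain L where L: "\<forall>\<rho>\<ge>0. E_o W \<rho> unif = \<rho> * L" using linear_case[OF m0(1) m0(3) qe ve] by blast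
  have "a * L - a * R = b * L - b * R" using gab L a0 b0 by simp
  then have "(b - a) * (L - R) = 0" by (simp add: algebra_simps)
  then have LR: "L = R" using ab by simp
  define r'' where "r'' = (R_inf W + R) / 2"
  have r''1: "R_inf W < r''" and r''2: "r'' < R" unfolding r''_def using Rinf by auto
  obtain M where M: "\<forall>\<rho>\<ge>0. E_o W \<rho> unif - \<rho> * r'' \<le> M" using g_bounded[OF r''1] by blast
  define \<rho> where "\<rho> = (\<bar>M\<bar> + 1) / (R - r'')"
  have \<rho>0: "0 \<le> \<rho>" unfolding \<rho>_def using r''2 by simp
  have "\<rho> * (R - r'') = \<bar>M\<bar> + 1" unfolding \<rho>_def using r''2 by simp
  moreover have "E_o W \<rho> unif - \<rho> * r'' = \<rho> * (R - r'')" using L \<rho>0 LR by (simp add: algebra_simps)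
  ultimately have "\<bar>M\<bar> + 1 \<le> M" using M \<rho>0 by metis
  then show False by simp
qed

lemma ismax_unique: "R_inf W < R \<Longrightarrow> ismax R a \<Longrightarrow> ismax R b \<Longrightarrow> a = b"
  using ismax_lt_False by (metis linorder_neqE_linordered_idom)

definition rhos :: "real \<Rightarrow> real" where "rhos r = (SOME \<rho>. ismax r \<rho>)"

lemma rhos: "R_inf W < r \<Longrightarrow> ismax r (rhos r)"
  unfolding rhos_def using exists_max[of r] unfolding ismax_def by (rule someI_ex) blast

lemma h_eq: "R_inf W < r \<Longrightarrow> r < capacity W \<Longrightarrow>
   real_of_ereal (E_SP_Q W r unif) = E_o W (rhos r) unif - rhos r * r"
  using ESPQ_eq[OF rhos] by simp

lemma rhos_cont:
  assumes Rinf: "R_inf W < R" and RC: "R < capacity W" and e: "0 < \<epsilon>"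
  shows "\<exists>d>0. \<forall>r. \<bar>r - R\<bar> < d \<longrightarrow> R_inf W < r \<and> r < capacity W \<and> \<bar>rhos r - rhos R\<bar> < \<epsilon>"
proof -
  define p where "p = rhos R"
  have mp: "ismax R p" unfolding p_def by (rule rhos[OF Rinf])
  have pp: "0 < p" by (rule ismax_rt(1)[OF mp RC])
  define e where "e = min \<epsilon> p / 2"
  have e0: "0 < e" "e < p" "e < \<epsilon>" unfolding e_def using e pp by (auto simp: min_def)
  have rp: "rt W (p + e) < R"
  proof -
    have le: "rt W (p + e) \<le> R" using ismax_right[OF mp] e0 by simp
    have "rt W (p + e) \<noteq> R"
    proof
      assume eqR: "rt W (p + e) = R"
      have "ismax R (p + e)" unfolding ismax_def
      proof (intro conjI allI impI)
        show "0 \<le> p + e" using pp e0 by simp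
        fix \<rho> :: real assume r0: "0 \<le> \<rho>"
        have "E_o W p unif \<le> E_o W (p + e) unif + (p - (p + e)) * rt W (p + e)"
          by (rule SG) (use pp e0 in auto)
        then have "E_o W p unif - p * R \<le> E_o W (p + e) unif - (p + e) * R" unfolding eqR by (simp add: algebra_simps)
        moreover have "E_o W \<rho> unif - \<rho> * R \<le> E_o W p unif - p * R" using mp r0 unfolding ismax_def by blast
        ultimately show "E_o W \<rho> unif - \<rho> * R \<le> E_o W (p + e) unif - (p + e) * R" by linarith
      qed
      then have "p + e = p" using ismax_unique[OF Rinf _ mp] by blast
      then show False using e0 by simp
    qed
    then show ?thesis using le by simp
  qed
  have rm: "R < rt W (p - e)"
  proof -
    have le: "R \<le> rt W (p - e)" using ismax_left[OF mp] e0 by simp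
    have "rt W (p - e) \<noteq> R"
    proof
      assume eqR: "rt W (p - e) = R"
      have "ismax R (p - e)" unfolding ismax_def
      proof (intro conjI allI impI)
        show "0 \<le> p - e" using pp e0 by simp
        fix \<rho> :: real assume r0: "0 \<le> \<rho>"
        have "E_o W p unif \<le> E_o W (p - e) unif + (p - (p - e)) * rt W (p - e)"
          by (rule SG) (use pp e0 in auto)
        then have "E_o W p unif - p * R \<le> E_o W (p - e) unif - (p - e) * R" unfolding eqR by (simp add: algebra_simps)
        moreover have "E_o W \<rho> unif - \<rho> * R \<le> E_o W p unif - p * R" using mp r0 unfolding ismax_def by blast
        ultimately show "E_o W \<rho> unif - \<rho> * R \<le> E_o W (p - e) unif - (p - e) * R" by linarith
      qed
      then have "p - e = p" using ismax_unique[OF Rinf _ mp] by blast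
      then show False using e0 by simp
    qed
    then show ?thesis using le by simp
  qed
  define d where "d = min (min (R - rt W (p + e)) (rt W (p - e) - R)) (min (R - R_inf W) (capacity W - R))"
  have d0: "0 < d" unfolding d_def using rp rm Rinf RC by simp
  have "R_inf W < r \<and> r < capacity W \<and> \<bar>rhos r - p\<bar> < \<epsilon>" if r: "\<bar>r - R\<bar> < d" for r
  proof -
    have r1: "R_inf W < r" "r < capacity W" "rt W (p + e) < r" "r < rt W (p - e)"
      using r unfolding d_def by (auto simp: abs_less_iff)
    have mr: "ismax r (rhos r)" by (rule rhos[OF r1(1)])
    have rtr: "rt W (rhos r) = r" by (rule ismax_rt(2)[OF mr r1(2)])
    have rr0: "0 \<le> rhos r" using mr unfolding ismax_def by simp
    have u: "rhos r < p + e"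
    proof (rule ccontr)
      assume "\<not> rhos r < p + e"
      then have "rt W (rhos r) \<le> rt W (p + e)" using rt_mono[of "p + e" "rhos r"] pp e0 by simp
      then show False using rtr r1 by simp
    qed
    have l: "p - e < rhos r"
    proof (rule ccontr)
      assume "\<not> p - e < rhos r"
      then have "rt W (p - e) \<le> rt W (rhos r)" using rt_mono[of "rhos r" "p - e"] rr0 by simp
      then show False using rtr r1 by simp
    qed
    show ?thesis using u l e0 r1 by (simp add: abs_less_iff)
  qed
  then show ?thesis using d0 unfolding p_def by blast
qed

lemma h_deriv:
  assumes Rinf: "R_inf W < R" and RC: "R < capacity W"
  shows "((\<lambda>r. real_of_ereal (E_SP_Q W r unif)) has_field_derivative (- rhos R)) (at R)"
proof -
  define h where "h = (\<lambda>r. real_of_ereal (E_SP_Q W r unif))"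
  define p where "p = rhos R"
  have mp: "ismax R p" unfolding p_def by (rule rhos[OF Rinf])
  have bound: "\<bar>h r - h R + p * (r - R)\<bar> \<le> \<bar>rhos r - p\<bar> * \<bar>r - R\<bar>"
    if r: "R_inf W < r" "r < capacity W" for r
  proof -
    have mr: "ismax r (rhos r)" by (rule rhos[OF r(1)])
    have hr: "h r = E_o W (rhos r) unif - rhos r * r" unfolding h_def by (rule h_eq[OF r])
    have hR: "h R = E_o W p unif - p * R" unfolding h_def p_def by (rule h_eq[OF Rinf RC])
    have p0: "0 \<le> p" "0 \<le> rhos r" using mp mr unfolding ismax_def by auto
    have i1: "E_o W p unif - p * r \<le> h r" unfolding hr using mr p0 unfolding ismax_def by blast
    have i2: "E_o W (rhos r) unif - rhos r * R \<le> h R" unfolding hR using mp p0 unfolding ismax_def by blast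
    have lo: "0 \<le> h r - h R + p * (r - R)" using i1 hR by (simp add: algebra_simps)
    have hi: "h r - h R + p * (r - R) \<le> (p - rhos r) * (r - R)" using i2 hr by (simp add: algebra_simps)
    have "(p - rhos r) * (r - R) \<le> \<bar>rhos r - p\<bar> * \<bar>r - R\<bar>"
      by (metis abs_ge_self abs_minus_commute abs_mult)
    then show ?thesis using lo hi by simp
  qed
  have "((\<lambda>y. (h y - h R) / (y - R)) \<longlongrightarrow> - p) (at R)"
    unfolding LIM_eq
  proof (intro allI impI)
    fix \<epsilon> :: real assume e: "0 < \<epsilon>"
    obtain d where d: "d > 0" "\<forall>r. \<bar>r - R\<bar> < d \<longrightarrow> R_inf W < r \<and> r < capacity W \<and> \<bar>rhos r - p\<bar> < \<epsilon>"
      using rhos_cont[OF Rinf RC e] unfolding p_def by blast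
    have "norm ((h y - h R) / (y - R) - - p) < \<epsilon>" if y: "y \<noteq> R" "norm (y - R) < d" for y
    proof -
      have yy: "R_inf W < y" "y < capacity W" "\<bar>rhos y - p\<bar> < \<epsilon>" using d(2) y by auto
      have nz: "\<bar>y - R\<bar> > 0" using y by simp
      have "(h y - h R) / (y - R) - - p = (h y - h R + p * (y - R)) / (y - R)"
        using y by (simp add: field_simps)
      then have "norm ((h y - h R) / (y - R) - - p) = \<bar>h y - h R + p * (y - R)\<bar> / \<bar>y - R\<bar>"
        by simp
      also have "\<dots> \<le> \<bar>rhos y - p\<bar>"
        using bound[OF yy(1,2)] pos_divide_le_eq[OF nz] by simp
      also have "\<dots> < \<epsilon>" using yy(3) .
      finally show ?thesis .
    qed
    then show "\<exists>s>0. \<forall>x. x \<noteq> R \<and> norm (x - R) < s \<longrightarrow> norm ((h x - h R) / (x - R) - - p) < \<epsilon>"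
      using d(1) by blast
  qed
  then show ?thesis unfolding has_field_derivative_iff h_def p_def .
qed

lemma rho_R_eq: "R_inf W < R \<Longrightarrow> R < capacity W \<Longrightarrow> rho_R W R = rhos R"
  unfolding rho_R_def using DERIV_imp_deriv[OF h_deriv] by simp

end


context symch begin

lemma SOL_at: assumes r: "0 \<le> \<rho>"
  shows "saddle_obj W R \<rho> (qt W \<rho>) = ereal (E_o W \<rho> unif - \<rho> * R)"
proof -
  define Z where "Z = Zf W \<rho> unif"
  have Zp: "Z > 0" unfolding Z_def by (rule Zpos)
  have a: "(\<Sum>y\<in>UNIV. W x y powr (1 / (1 + \<rho>)) * rpow (qt W \<rho> y) (\<rho> / (1 + \<rho>))) = Z powr (1 / (1 + \<rho>))" for x
    using suq[OF r, of x] unfolding uvec_def Z_def .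
  have nz: "\<not> (\<exists>x. (\<Sum>y\<in>UNIV. W x y powr (1 / (1 + \<rho>)) * rpow (qt W \<rho> y) (\<rho> / (1 + \<rho>))) = 0)"
    unfolding a using Zp by simp
  have "(\<Sum>x\<in>UNIV. (unif::'x\<Rightarrow>real) x * ln (Z powr (1 / (1 + \<rho>)))) = (\<Sum>x::'x\<in>UNIV. unif x) * ln (Z powr (1 / (1 + \<rho>)))"
    by (rule sum_distrib_right[symmetric])
  also have "\<dots> = 1 / (1 + \<rho>) * ln Z" unfolding pdist_sum[OF unif_pdist] using Zp by simp
  finally have s: "(\<Sum>x\<in>UNIV. (unif::'x\<Rightarrow>real) x * ln (Z powr (1 / (1 + \<rho>)))) = 1 / (1 + \<rho>) * ln Z" .
  have "(1 + \<rho>) * (1 / (1 + \<rho>) * ln Z) = ln Z" using r by simp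
  then show ?thesis unfolding saddle_obj_def using nz unfolding a s E_o_Zf Z_def[symmetric] by simp
qed

lemma saddle_up:
  assumes m: "ismax R \<rho>s" and rt: "rt W \<rho>s = R" and r: "0 \<le> \<rho>"
  shows "saddle_obj W R \<rho> (qt W \<rho>s) \<le> ereal (E_o W \<rho>s unif - \<rho>s * R)"
proof -
  have r0: "0 \<le> \<rho>s" using m unfolding ismax_def by simp
  have ac: "\<forall>x y. unif x > (0::real) \<longrightarrow> Vt W \<rho>s x y \<noteq> 0 \<longrightarrow> W x y \<noteq> 0" using Vt_zero by blast
  note M = WD_main[OF W Vt_channel[OF r0] unif_pdist r ac, unfolded pout_Vt[OF r0]]
  define a where "a = (\<lambda>x. sum (uvec W \<rho> (qt W \<rho>s) x) UNIV)"
  have ap: "a x > 0" for x using M(1) unif_pos unfolding a_def by blast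
  have per: "- (1 + \<rho>) * ln (a x) \<le> E_o W \<rho>s unif - \<rho>s * R + \<rho> * R" for x
  proof -
    have "- ln (a x) \<le> kl (Vt W \<rho>s x) (uvec W \<rho> (qt W \<rho>s) x)" using M(2) unif_pos unfolding a_def by blast
    then have "(1 + \<rho>) * (- ln (a x)) \<le> (1 + \<rho>) * kl (Vt W \<rho>s x) (uvec W \<rho> (qt W \<rho>s) x)"
      using r by (intro mult_left_mono) auto
    also have "\<dots> = kl (Vt W \<rho>s x) (W x) + \<rho> * kl (Vt W \<rho>s x) (qt W \<rho>s)" using M(3) unif_pos by metis
    also have "\<dots> = E_o W \<rho>s unif - \<rho>s * R + \<rho> * R" unfolding kl_Vt_W[OF r0] kl_Vt_q[OF r0] rt ..
    finally show ?thesis by (simp only: mult_minus_left mult_minus_right)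
  qed
  have "(\<Sum>x\<in>UNIV. unif x * (- (1 + \<rho>) * ln (a x))) \<le> (\<Sum>x::'x\<in>UNIV. unif x * (E_o W \<rho>s unif - \<rho>s * R + \<rho> * R))"
    by (rule sum_mono, rule mult_left_mono[OF per], rule less_imp_le[OF unif_pos])
  also have "\<dots> = (\<Sum>x::'x\<in>UNIV. unif x) * (E_o W \<rho>s unif - \<rho>s * R + \<rho> * R)"
    by (rule sum_distrib_right[symmetric])
  also have "\<dots> = E_o W \<rho>s unif - \<rho>s * R + \<rho> * R"
    unfolding pdist_sum[OF unif_pdist] by simp
  finally have S0: "(\<Sum>x\<in>UNIV. unif x * (- (1 + \<rho>) * ln (a x))) \<le> E_o W \<rho>s unif - \<rho>s * R + \<rho> * R" .
  have "(\<Sum>x\<in>UNIV. unif x * (- (1 + \<rho>) * ln (a x))) = - (1 + \<rho>) * (\<Sum>x\<in>UNIV. unif x * ln (a x))"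
    unfolding sum_distrib_left by (rule sum.cong[OF refl]) (simp only: mult.left_commute)
  then have S: "- (1 + \<rho>) * (\<Sum>x\<in>UNIV. unif x * ln (a x)) \<le> E_o W \<rho>s unif - \<rho>s * R + \<rho> * R"
    using S0 by simp
  have nz: "\<not> (\<exists>x. (\<Sum>y\<in>UNIV. W x y powr (1 / (1 + \<rho>)) * rpow (qt W \<rho>s y) (\<rho> / (1 + \<rho>))) = 0)"
    using ap unfolding a_def uvec_def by (metis less_irrefl)
  have "saddle_obj W R \<rho> (qt W \<rho>s) = ereal (- \<rho> * R - (1 + \<rho>) * (\<Sum>x\<in>UNIV. unif x * ln (a x)))"
    unfolding saddle_obj_def a_def uvec_def using nz by simp
  also have "\<dots> \<le> ereal (E_o W \<rho>s unif - \<rho>s * R)"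
  proof -
    have S': "- ((1 + \<rho>) * (\<Sum>x\<in>UNIV. unif x * ln (a x))) \<le> E_o W \<rho>s unif - \<rho>s * R + \<rho> * R"
      using S by (simp only: mult_minus_left)
    have "- \<rho> * R - (1 + \<rho>) * (\<Sum>x\<in>UNIV. unif x * ln (a x)) \<le> E_o W \<rho>s unif - \<rho>s * R"
      using S' unfolding mult_minus_left by linarith
    then show ?thesis by simp
  qed
  finally show ?thesis .
qed

end

theorem proposition1:
  fixes W :: "'x::finite \<Rightarrow> 'y::finite \<Rightarrow> real" and R :: real
  assumes "channel W" and "symmetric_channel W"
    and "R_cr W < capacity W"
    and "R_inf W < R" and "R < capacity W"
  shows "(E_SP W R = E_SP_Q W R unif \<and> E_SP_Q W R unif = E_SP_tilde_Q W R unif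
            \<and> E_SP_tilde_Q W R unif = E_SP_tilde W R)
       \<and> (\<forall>\<rho>\<ge>0. \<forall>x. (\<Sum>y\<in>UNIV. W x y powr (1 / (1 + \<rho>)) *
              rpow (\<Sum>z\<in>UNIV. unif z * W z y powr (1 / (1 + \<rho>))) \<rho>)
           = (\<Sum>y\<in>UNIV. (\<Sum>z\<in>UNIV. unif z * W z y powr (1 / (1 + \<rho>))) powr (1 + \<rho>)))
       \<and> (0 \<le> rho_R W R \<and>
            ereal (E_o W (rho_R W R) unif - rho_R W R * R) = E_SP_tilde_Q W R unif)
       \<and> (E_SP_Q W R unif = (SUP \<rho>\<in>{0..}. INF q\<in>{q. pdist q}. saddle_obj W R \<rho> q)
            \<and> is_saddle W R (rho_R W R) (q_R W R)
            \<and> (\<forall>\<rho> q. is_saddle W R \<rho> q \<longrightarrow> \<rho> = rho_R W R \<and> q = q_R W R))"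
proof -
  obtain P where SP: "sym_part W P" using symmetric_channel_part[OF assms(2)] by blast
  interpret S: symch W P using assms(1) SP by unfold_locales
  note Rinf = assms(4) and RC = assms(5)
  define p where "p = S.rhos R"
  have mp: "S.ismax R p" unfolding p_def by (rule S.rhos[OF Rinf])
  have p0: "0 \<le> p" using mp unfolding S.ismax_def by simp
  have pp: "0 < p" by (rule S.ismax_rt(1)[OF mp RC])
  have rtp: "rt W p = R" by (rule S.ismax_rt(2)[OF mp RC])
  have rhoR: "rho_R W R = p" unfolding p_def by (rule S.rho_R_eq[OF Rinf RC])
  have qR: "q_R W R = qt W p" unfolding q_R_def rhoR qt_def alpha_def Zf_def ..
  define G where "G = E_o W p unif - p * R"
  have gmax: "E_o W \<rho> unif - \<rho> * R \<le> G" if "0 \<le> \<rho>" for \<rho>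
    using mp that unfolding S.ismax_def G_def by blast
  have ESPQ: "E_SP_Q W R unif = ereal G" unfolding G_def by (rule S.ESPQ_eq[OF mp RC])
  have EtU: "E_SP_tilde_Q W R unif = ereal G"
    unfolding E_SP_tilde_Q_def
  proof (rule antisym)
    show "(SUP \<rho>\<in>{0..}. ereal (E_o W \<rho> unif - \<rho> * R)) \<le> ereal G"
      by (rule SUP_least) (use gmax in simp)
    show "ereal G \<le> (SUP \<rho>\<in>{0..}. ereal (E_o W \<rho> unif - \<rho> * R))"
      unfolding G_def by (rule SUP_upper) (use p0 in simp)
  qed
  have ESP: "E_SP W R = ereal G"
  proof (rule antisym)
    show "E_SP W R \<le> ereal G" unfolding E_SP_def
    proof (rule SUP_least)
      fix Q :: "'x \<Rightarrow> real" assume "Q \<in> {Q. pdist Q}"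
      then have Q: "pdist Q" by simp
      have "Vt W p \<in> {V. channel V \<and> mutual_info Q V \<le> R}"
        using S.Vt_channel[OF p0] S.MI_Vt[OF p0 Q] rtp by simp
      then have "E_SP_Q W R Q \<le> cond_div (Vt W p) W Q" unfolding E_SP_Q_def by (rule INF_lower)
      also have "\<dots> = ereal G" unfolding S.cond_div_Vt[OF p0 Q] rtp G_def ..
      finally show "E_SP_Q W R Q \<le> ereal G" .
    qed
    show "ereal G \<le> E_SP W R" using S.ESPQ_le[of R] ESPQ by simp
  qed
  have Et: "E_SP_tilde W R = ereal G"
  proof (rule antisym)
    show "E_SP_tilde W R \<le> ereal G" unfolding E_SP_tilde_def
    proof (rule SUP_least)
      fix Q :: "'x \<Rightarrow> real" assume "Q \<in> {Q. pdist Q}"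
      then have Q: "pdist Q" by simp
      have "E_SP_tilde_Q W R Q \<le> E_SP_Q W R Q" by (rule WD1[OF assms(1) Q])
      also have "\<dots> \<le> E_SP W R" unfolding E_SP_def by (rule SUP_upper) (use Q in simp)
      finally show "E_SP_tilde_Q W R Q \<le> ereal G" using ESP by simp
    qed
    show "ereal G \<le> E_SP_tilde W R" unfolding E_SP_tilde_def EtU[symmetric]
      by (rule SUP_upper) (simp add: unif_pdist)
  qed
  have part2: "\<forall>\<rho>\<ge>0. \<forall>x. (\<Sum>y\<in>UNIV. W x y powr (1 / (1 + \<rho>)) *
              rpow (\<Sum>z\<in>UNIV. unif z * W z y powr (1 / (1 + \<rho>))) \<rho>)
           = (\<Sum>y\<in>UNIV. (\<Sum>z\<in>UNIV. unif z * W z y powr (1 / (1 + \<rho>))) powr (1 + \<rho>))"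
    using S.ii unfolding alpha_def Zf_def by blast
  have INFq: "(INF q\<in>{q. pdist q}. saddle_obj W R \<rho> q) = ereal (E_o W \<rho> unif - \<rho> * R)" if r: "0 \<le> \<rho>" for \<rho>
  proof (rule antisym)
    show "(INF q\<in>{q. pdist q}. saddle_obj W R \<rho> q) \<le> ereal (E_o W \<rho> unif - \<rho> * R)"
      using INF_lower[of "qt W \<rho>" "{q. pdist q}" "saddle_obj W R \<rho>"] S.qt_pdist[OF r] S.SOL_at[OF r] by simp
    show "ereal (E_o W \<rho> unif - \<rho> * R) \<le> (INF q\<in>{q. pdist q}. saddle_obj W R \<rho> q)"
      by (rule INF_greatest) (use SOL(1)[OF assms(1) _ r] in simp)
  qed
  have SI: "(SUP \<rho>\<in>{0..}. INF q\<in>{q. pdist q}. saddle_obj W R \<rho> q) = E_SP_tilde_Q W R unif"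
    unfolding E_SP_tilde_Q_def by (rule SUP_cong) (auto simp: INFq)
  have objp: "saddle_obj W R p (qt W p) = ereal G" unfolding G_def by (rule S.SOL_at[OF p0])
  have sad: "is_saddle W R (rho_R W R) (q_R W R)"
    unfolding is_saddle_def rhoR qR
  proof (intro conjI allI impI)
    show "0 \<le> p" by (rule p0)
    show "pdist (qt W p)" by (rule S.qt_pdist[OF p0])
    fix \<rho> :: real and q :: "'y \<Rightarrow> real" assume r: "0 \<le> \<rho>" and q: "pdist q"
    show "saddle_obj W R \<rho> (qt W p) \<le> saddle_obj W R p (qt W p)"
      unfolding objp G_def by (rule S.saddle_up[OF mp rtp r])
    show "saddle_obj W R p (qt W p) \<le> saddle_obj W R p q"
      unfolding objp G_def by (rule SOL(1)[OF assms(1) q p0])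
  qed
  have uniq: "\<rho> = rho_R W R \<and> q = q_R W R" if s: "is_saddle W R \<rho> q" for \<rho> q
  proof -
    have r: "0 \<le> \<rho>" and q: "pdist q"
      and sd: "\<forall>\<rho>'\<ge>0. \<forall>q'. pdist q' \<longrightarrow> saddle_obj W R \<rho>' q \<le> saddle_obj W R \<rho> q \<and> saddle_obj W R \<rho> q \<le> saddle_obj W R \<rho> q'"
      using s unfolding is_saddle_def by auto
    have up: "saddle_obj W R \<rho> q \<le> ereal (E_o W \<rho> unif - \<rho> * R)"
      using sd r S.qt_pdist[OF r] S.SOL_at[OF r] by metis
    have lo: "ereal (E_o W \<rho> unif - \<rho> * R) \<le> saddle_obj W R \<rho> q" by (rule SOL(1)[OF assms(1) q r])
    have mx: "S.ismax R \<rho>" unfolding S.ismax_def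
    proof (intro conjI allI impI)
      show "0 \<le> \<rho>" by (rule r)
      fix \<rho>' :: real assume r': "0 \<le> \<rho>'"
      have "ereal (E_o W \<rho>' unif - \<rho>' * R) \<le> saddle_obj W R \<rho>' q" by (rule SOL(1)[OF assms(1) q r'])
      also have "\<dots> \<le> saddle_obj W R \<rho> q" using sd r' q by blast
      also have "\<dots> \<le> ereal (E_o W \<rho> unif - \<rho> * R)" by (rule up)
      finally show "E_o W \<rho>' unif - \<rho>' * R \<le> E_o W \<rho> unif - \<rho> * R" by simp
    qed
    have rp: "\<rho> = p" using S.ismax_unique[OF Rinf mx mp] .
    have eqo: "saddle_obj W R \<rho> q = ereal (E_o W \<rho> unif - \<rho> * R)" using up lo by (rule antisym)
    have "q y = qt W \<rho> y" for y
      using SOL(2)[OF assms(1) q r _ eqo, of y] pp rp unfolding qt_def by simp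
    then have "q = qt W p" using rp by auto
    then show ?thesis using rp rhoR qR by simp
  qed
  show ?thesis
  proof (intro conjI)
    show "E_SP W R = E_SP_Q W R unif" using ESP ESPQ by simp
    show "E_SP_Q W R unif = E_SP_tilde_Q W R unif" using ESPQ EtU by simp
    show "E_SP_tilde_Q W R unif = E_SP_tilde W R" using EtU Et by simp
    show "\<forall>\<rho>\<ge>0. \<forall>x. (\<Sum>y\<in>UNIV. W x y powr (1 / (1 + \<rho>)) *
              rpow (\<Sum>z\<in>UNIV. unif z * W z y powr (1 / (1 + \<rho>))) \<rho>)
           = (\<Sum>y\<in>UNIV. (\<Sum>z\<in>UNIV. unif z * W z y powr (1 / (1 + \<rho>))) powr (1 + \<rho>))"
      by (rule part2)
    show "0 \<le> rho_R W R" using p0 rhoR by simp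
    show "ereal (E_o W (rho_R W R) unif - rho_R W R * R) = E_SP_tilde_Q W R unif"
      unfolding EtU rhoR G_def ..
    show "E_SP_Q W R unif = (SUP \<rho>\<in>{0..}. INF q\<in>{q. pdist q}. saddle_obj W R \<rho> q)"
      unfolding SI ESPQ EtU ..
    show "is_saddle W R (rho_R W R) (q_R W R)" by (rule sad)
    show "\<forall>\<rho> q. is_saddle W R \<rho> q \<longrightarrow> \<rho> = rho_R W R \<and> q = q_R W R" using uniq by blast
  qed
qed


end
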